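(* Let $v,a,b,c\in\mathbb{C}$ with $\Re(v)<2$, $\Re(c)>0$, and $\Re(vc+a+b)>0$, $\Re(vc+a-b)>0$, $\Re(vc-a+b)>0$, $\Re(vc-a-b)>0$. Fix a square root $\sqrt{a^2+b^2}$ and put $\lambda_1=\frac v2-\frac{\sqrt{a^2+b^2}}{2c}$, $\lambda_2=\frac v2+\frac{\sqrt{a^2+b^2}}{2c}$, $\sigma_3=\frac v2-\frac{a}{2c}-\frac{b}{2c}$, $\sigma_4=\frac v2-\frac{a}{2c}+\frac{b}{2c}$, $\sigma_5=\frac v2+\frac{a}{2c}+\frac{b}{2c}$, $\sigma_6=\frac v2+\frac{a}{2c}-\frac{b}{2c}$, and $P=(vc-a-b)(vc+a+b)(vc-a+b)(vc+a-b)$. Assume $\frac v2,\lambda_1,\lambda_2\notin\mathbb{Z}_0^-$ and $1+\sigma_j\notin\mathbb{Z}_0^-$ for $j=3,4,5,6$. Then $$ {}_8F_7\!\left(\begin{matrix}v,\ 1+\frac v2,\ 1+\lambda_1,\ 1+\lambda_2,\ \sigma_3,\ \sigma_4,\ \sigma_5,\ \sigma_6\\ \frac v2,\ \lambda_1,\ \lambda_2,\ 1+\sigma_3,\ 1+\sigma_4,\ 1+\sigma_5,\ 1+\sigma_6\end{matrix};\,-1\right) =\frac{P}{8\,(v^3c^4-a^2vc^2-b^2vc^2)\,\Gamma(v)}\Big[\Gamma(\sigma_5)\Gamma(\sigma_3)+\Gamma(\sigma_6)\Gamma(\sigma_4)\Big]. $$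
   Context: $\mathbb{Z}_0^-=\{0,-1,-2,\dots\}$. The Pochhammer symbol is $(\lambda)_0=1$, $(\lambda)_n=\lambda(\lambda+1)\cdots(\lambda+n-1)$ for $n\ge1$. The generalized hypergeometric series is ${}_pF_q\!\left(\begin{matrix}\alpha_1,\dots,\alpha_p\\ \beta_1,\dots,\beta_q\end{matrix};z\right)=\sum_{n=0}^\infty\frac{(\alpha_1)_n\cdots(\alpha_p)_n}{(\beta_1)_n\cdots(\beta_q)_n}\frac{z^n}{n!}$ (with no $\beta_j\in\mathbb{Z}_0^-$); when $p=q+1$ and $z=-1$ it converges if $\Re(\sum\beta_j-\sum\alpha_i)>-1$. $\Gamma$ is Euler's gamma function. *)

theory Defs
  imports "HOL-Analysis.Analysis"
begin

definition hyper_term :: "complex list \<Rightarrow> complex list \<Rightarrow> complex \<Rightarrow> nat \<Rightarrow> complex" where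
  "hyper_term as bs z n =
     (\<Prod>a\<leftarrow>as. pochhammer a n) / (\<Prod>b\<leftarrow>bs. pochhammer b n) * z ^ n / of_nat (fact n)"

definition hypergeometric :: "complex list \<Rightarrow> complex list \<Rightarrow> complex \<Rightarrow> complex" where
  "hypergeometric as bs z = (\<Sum>n. hyper_term as bs z n)"

end

theory Submission
  imports Defs "HOL-Complex_Analysis.Complex_Analysis"
begin


lemma poch_bound_real:
  fixes \<rho> :: real assumes "\<rho> > 0"
  shows "\<exists>C>0. \<forall>n\<ge>1. pochhammer \<rho> n / fact n \<le> C * real n powr (\<rho> - 1)"
proof -
  have "rGamma_series \<rho> \<longlonglongrightarrow> rGamma \<rho>" by (rule rGamma_series_LIMSEQ)
  then have "Bseq (rGamma_series \<rho>)" by (rule convergent_imp_Bseq[OF convergentI])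
  then obtain K where K: "K > 0" "\<And>n. norm (rGamma_series \<rho> n) \<le> K" by (auto elim: BseqE)
  show ?thesis
  proof (intro exI[of _ K] conjI allI impI)
    fix n :: nat assume n: "n \<ge> 1"
    have pos: "pochhammer \<rho> n > 0" "pochhammer \<rho> (n+1) > 0" using assms by (auto intro: pochhammer_pos)
    have e: "exp (\<rho> * ln (real n)) = real n powr \<rho>" using n by (simp add: powr_def)
    have "rGamma_series \<rho> n = pochhammer \<rho> (n+1) / (fact n * real n powr \<rho>)"
      unfolding rGamma_series_def using e by simp
    with K(2)[of n] pos have "pochhammer \<rho> (n+1) / (fact n * real n powr \<rho>) \<le> K" by simp
    hence 1: "pochhammer \<rho> (n+1) \<le> K * (fact n * real n powr \<rho>)"
      using n by (simp add: divide_le_eq)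
    have "pochhammer \<rho> (n+1) = pochhammer \<rho> n * (\<rho> + real n)" by (simp add: pochhammer_Suc)
    also have "\<dots> \<ge> pochhammer \<rho> n * real n" using pos assms by (intro mult_left_mono) auto
    finally have "pochhammer \<rho> n * real n \<le> K * (fact n * real n powr \<rho>)" using 1 by linarith
    hence "pochhammer \<rho> n \<le> K * fact n * (real n powr \<rho> / real n)" using n
      by (simp add: field_simps)
    also have "real n powr \<rho> / real n = real n powr (\<rho> - 1)" using n by (simp add: powr_diff)
    finally show "pochhammer \<rho> n / fact n \<le> K * real n powr (\<rho> - 1)"
      by (simp add: divide_le_eq mult_ac)
  qed (use K in auto)
qed

lemma summable_poch_div:
  fixes \<rho> \<sigma> :: real assumes "\<rho> > 0" "\<rho> < 1" "\<sigma> > 0"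
  shows "summable (\<lambda>n. pochhammer \<rho> n / fact n / (real n + \<sigma>))"
proof -
  obtain C where C: "C > 0" "\<And>n. n\<ge>1 \<Longrightarrow> pochhammer \<rho> n / fact n \<le> C * real n powr (\<rho> - 1)"
    using poch_bound_real[OF assms(1)] by auto
  have s: "summable (\<lambda>n. C * real n powr (\<rho> - 2))"
    using assms by (intro summable_mult) (simp add: summable_real_powr_iff)
  show ?thesis
  proof (rule summable_comparison_test_ev[OF _ s])
    show "\<forall>\<^sub>F n in sequentially. norm (pochhammer \<rho> n / fact n / (real n + \<sigma>)) \<le> C * real n powr (\<rho> - 2)"
      using eventually_ge_at_top[of "1::nat"]
    proof eventually_elim
      case (elim n)
      have p: "pochhammer \<rho> n / fact n \<ge> 0" using assms by (intro divide_nonneg_pos pochhammer_nonneg) auto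
      have "norm (pochhammer \<rho> n / fact n / (real n + \<sigma>)) = pochhammer \<rho> n / fact n / (real n + \<sigma>)"
        using p assms by (simp add: pochhammer_nonneg less_imp_le)
      also have "\<dots> \<le> pochhammer \<rho> n / fact n / real n"
        using p assms elim by (intro divide_left_mono) auto
      also have "\<dots> \<le> C * real n powr (\<rho> - 1) / real n"
        using C(2)[OF elim] elim by (intro divide_right_mono) auto
      also have "\<dots> = C * real n powr (\<rho> - 2)" using elim
        by (simp add: powr_diff field_simps power2_eq_square)
      finally show ?case .
    qed
  qed
qed


lemma powser_cont01:
  fixes b :: "nat \<Rightarrow> real"
  assumes "summable (\<lambda>n. norm (b n))"
  shows "continuous_on {0..1} (\<lambda>x. \<Sum>n. b n * x^n)"
proof -
  have "uniform_limit {0..1::real} (\<lambda>N x. \<Sum>i<N. b i * x^i) (\<lambda>x. \<Sum>i. b i * x^i) sequentially"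
  proof (rule Weierstrass_m_test[OF _ assms])
    fix n x assume "x \<in> {0..1::real}"
    then have "norm (x^n) \<le> 1" by (simp add: power_le_one)
    then show "norm (b n * x^n) \<le> norm (b n)"
      unfolding norm_mult by (rule mult_left_le) auto
  qed
  then show ?thesis
    by (rule uniform_limit_theorem[rotated]) (auto intro!: continuous_intros always_eventually)
qed

lemma base_fun:
  fixes a :: "nat \<Rightarrow> real" and \<sigma> :: real and A :: "real \<Rightarrow> real"
  assumes \<sigma>: "\<sigma> > 0" and sm: "summable (\<lambda>n. \<bar>a n\<bar> / (real n + \<sigma>))"
    and As: "\<And>x. 0 < x \<Longrightarrow> x < 1 \<Longrightarrow> (\<lambda>n. a n * x^n) sums A x"
  shows "continuous_on {0..1} (\<lambda>x. x powr \<sigma> * (\<Sum>n. a n / (real n + \<sigma>) * x^n))"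
    and "\<And>x. 0 < x \<Longrightarrow> x < 1 \<Longrightarrow>
        ((\<lambda>x. x powr \<sigma> * (\<Sum>n. a n / (real n + \<sigma>) * x^n)) has_real_derivative x powr (\<sigma> - 1) * A x) (at x)"
proof -
  define b where "b n = a n / (real n + \<sigma>)" for n
  have nb: "norm (b n) = \<bar>a n\<bar> / (real n + \<sigma>)" for n
    using \<sigma> unfolding b_def real_norm_def abs_divide by (simp add: abs_of_pos add_nonneg_pos)
  have smb: "summable (\<lambda>n. norm (b n))" unfolding nb by (rule sm)
  have c1: "continuous_on {0..1} (\<lambda>x. \<Sum>n. b n * x^n)" by (rule powser_cont01[OF smb])
  have c2: "continuous_on {0..1::real} (\<lambda>x. x powr \<sigma>)"
    by (rule continuous_on_powr') (use \<sigma> in \<open>auto intro!: continuous_intros\<close>)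
  show "continuous_on {0..1} (\<lambda>x. x powr \<sigma> * (\<Sum>n. a n / (real n + \<sigma>) * x^n))"
    using continuous_on_mult[OF c2 c1] by (simp add: b_def)
  fix x :: real assume x: "0 < x" "x < 1"
  have sb1: "summable (\<lambda>n. b n * 1^n)" using summable_norm_cancel[OF smb] by simp
  have d1: "((\<lambda>x. \<Sum>n. b n * x^n) has_real_derivative (\<Sum>n. diffs b n * x^n)) (at x)"
    by (rule termdiffs_strong[OF sb1]) (use x in auto)
  have d2: "((\<lambda>x. x powr \<sigma>) has_real_derivative \<sigma> * x powr (\<sigma> - 1)) (at x)"
    using x by (auto intro!: derivative_eq_intros)
  have sumsb: "(\<lambda>n. b n * x^n) sums (\<Sum>n. b n * x^n)"
    using sb1 x by (intro summable_sums powser_inside[of b 1 x]) auto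
  have "summable (\<lambda>n. diffs b n * x^n)"
    proof (rule termdiff_converges[of x 1])
    show "summable (\<lambda>n. b n * y ^ n)" if "norm y < 1" for y :: real
      using powser_inside[OF sb1, of y] that by simp
  qed (use x in auto)
  hence sumsd: "(\<lambda>n. diffs b n * x^n) sums (\<Sum>n. diffs b n * x^n)" by (rule summable_sums)
  have "(\<lambda>n. x * (diffs b n * x^n)) sums (x * (\<Sum>n. diffs b n * x^n))"
    by (rule sums_mult[OF sumsd])
  hence "(\<lambda>n. (\<lambda>m. real m * b m * x^m) (Suc n)) sums (x * (\<Sum>n. diffs b n * x^n))"
    by (simp add: diffs_def mult_ac)
  hence s3: "(\<lambda>m. real m * b m * x^m) sums (x * (\<Sum>n. diffs b n * x^n))"
    by (subst (asm) sums_Suc_iff) simp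
  have "(\<lambda>n. \<sigma> * (b n * x^n) + real n * b n * x^n) sums (\<sigma> * (\<Sum>n. b n * x^n) + x * (\<Sum>n. diffs b n * x^n))"
    by (intro sums_add sums_mult sumsb s3)
  moreover have "(\<lambda>n. \<sigma> * (b n * x^n) + real n * b n * x^n) = (\<lambda>n. a n * x^n)"
  proof (rule ext)
    fix n
    have h: "real n + \<sigma> \<noteq> 0" using \<sigma> by simp
    have e: "(\<sigma> + real n) * b n = a n" using h by (simp add: b_def add.commute)
    have "\<sigma> * (b n * x^n) + real n * b n * x^n = ((\<sigma> + real n) * b n) * x^n" by (simp add: algebra_simps)
    also have "\<dots> = a n * x^n" by (simp only: e)
    finally show "\<sigma> * (b n * x^n) + real n * b n * x^n = a n * x^n" .
  qed
  ultimately have key: "\<sigma> * (\<Sum>n. b n * x^n) + x * (\<Sum>n. diffs b n * x^n) = A x"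
    using As[OF x] sums_unique2 by metis
  have "((\<lambda>x. x powr \<sigma> * (\<Sum>n. b n * x^n)) has_real_derivative
          \<sigma> * x powr (\<sigma> - 1) * (\<Sum>n. b n * x^n) + x powr \<sigma> * (\<Sum>n. diffs b n * x^n)) (at x)"
    using DERIV_mult[OF d2 d1] by (simp add: mult_ac)
  moreover have "\<sigma> * x powr (\<sigma> - 1) * (\<Sum>n. b n * x^n) + x powr \<sigma> * (\<Sum>n. diffs b n * x^n)
      = x powr (\<sigma> - 1) * A x"
  proof -
    have "x powr \<sigma> = x powr (\<sigma> - 1) * x" using x by (simp add: powr_diff)
    thus ?thesis using key[symmetric] by (simp add: algebra_simps)
  qed
  ultimately show "((\<lambda>x. x powr \<sigma> * (\<Sum>n. a n / (real n + \<sigma>) * x^n)) has_real_derivative x powr (\<sigma> - 1) * A x) (at x)"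
    by (simp add: b_def)
qed


definition Lf :: "real \<Rightarrow> real \<Rightarrow> real \<Rightarrow> real" where
  "Lf \<sigma> y u = u powr \<sigma> * (\<Sum>n. (-1)^n * ((y-1) gchoose n) / (real n + \<sigma>) * u^n)"

definition Phi :: "real \<Rightarrow> real \<Rightarrow> real \<Rightarrow> real" where
  "Phi v \<sigma> x = x powr \<sigma> * (\<Sum>n. ((-v) gchoose n) / (real n + \<sigma>) * x^n)"

lemma gchoose_neg_abs:
  fixes v :: real assumes "v > 0"
  shows "\<bar>(-v) gchoose n\<bar> = pochhammer v n / fact n"
proof -
  have "(-v) gchoose n = (-1)^n * pochhammer v n / fact n" by (simp add: gbinomial_pochhammer)
  moreover have "pochhammer v n > 0" using assms by (intro pochhammer_pos)
  ultimately show ?thesis by (simp add: abs_mult abs_divide)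
qed

lemma gchoose_alt_pos:
  fixes y :: real
  shows "(-1)^n * ((y-1) gchoose n) = pochhammer (1-y) n / fact n"
  by (simp add: gbinomial_pochhammer)

lemma Lf_props:
  fixes \<sigma> y :: real assumes "\<sigma> > 0" "0 < y" "y < 1"
  shows "continuous_on {0..1} (Lf \<sigma> y)"
    and "\<And>u. 0 < u \<Longrightarrow> u < 1 \<Longrightarrow> (Lf \<sigma> y has_real_derivative u powr (\<sigma> - 1) * (1 - u) powr (y - 1)) (at u)"
    and "Lf \<sigma> y 0 = 0"
proof -
  define a where "a n = (-1)^n * ((y-1) gchoose n)" for n
  have sm: "summable (\<lambda>n. \<bar>a n\<bar> / (real n + \<sigma>))"
  proof -
    have "\<bar>a n\<bar> = pochhammer (1-y) n / fact n" for n
    proof -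
      have "pochhammer (1-y) n > 0" using assms by (intro pochhammer_pos) auto
      thus ?thesis unfolding a_def gchoose_alt_pos by simp
    qed
    thus ?thesis using summable_poch_div[of "1-y" \<sigma>] assms by simp
  qed
  have As: "(\<lambda>n. a n * u^n) sums (1 - u) powr (y - 1)" if "0 < u" "u < 1" for u
  proof -
    have ab: "\<bar>-u\<bar> < 1" using that by simp
    have e: "((y-1) gchoose n) * (-u)^n = a n * u^n" for n
    proof -
      have pm: "(-u)^n = (-1)^n * u^n" by (rule power_minus)
      show ?thesis by (simp only: a_def pm mult.assoc mult.left_commute)
    qed
    from gen_binomial_real[OF ab, of "y-1"]
    show ?thesis by (simp only: e diff_minus_eq_add[symmetric] minus_minus)
  qed
  have eq: "Lf \<sigma> y = (\<lambda>x. x powr \<sigma> * (\<Sum>n. a n / (real n + \<sigma>) * x^n))"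
    by (simp add: Lf_def a_def fun_eq_iff)
  show "continuous_on {0..1} (Lf \<sigma> y)" unfolding eq by (rule base_fun(1)[OF assms(1) sm As])
  show "(Lf \<sigma> y has_real_derivative u powr (\<sigma> - 1) * (1 - u) powr (y - 1)) (at u)"
    if "0 < u" "u < 1" for u unfolding eq by (rule base_fun(2)[OF assms(1) sm As that])
  show "Lf \<sigma> y 0 = 0" by (simp add: Lf_def)
qed

lemma Phi_props:
  fixes \<sigma> v :: real assumes "\<sigma> > 0" "0 < v" "v < 1"
  shows "continuous_on {0..1} (Phi v \<sigma>)"
    and "\<And>x. 0 < x \<Longrightarrow> x < 1 \<Longrightarrow> (Phi v \<sigma> has_real_derivative x powr (\<sigma> - 1) * (1 + x) powr (-v)) (at x)"
    and "Phi v \<sigma> 0 = 0"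
    and "summable (\<lambda>n. \<bar>(-v) gchoose n\<bar> / (real n + \<sigma>))"
proof -
  define a where "a n = ((-v) gchoose n)" for n
  show sm: "summable (\<lambda>n. \<bar>(-v) gchoose n\<bar> / (real n + \<sigma>))"
    using summable_poch_div[of v \<sigma>] assms by (simp add: gchoose_neg_abs)
  have As: "(\<lambda>n. a n * x^n) sums (1 + x) powr (-v)" if "0 < x" "x < 1" for x
  proof -
    have "\<bar>x\<bar> < 1" using that by simp
    from gen_binomial_real[OF this, of "-v"] show ?thesis by (simp add: a_def)
  qed
  have sm': "summable (\<lambda>n. \<bar>a n\<bar> / (real n + \<sigma>))" using sm by (simp add: a_def)
  have eq: "Phi v \<sigma> = (\<lambda>x. x powr \<sigma> * (\<Sum>n. a n / (real n + \<sigma>) * x^n))"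
    by (simp add: Phi_def a_def fun_eq_iff)
  show "continuous_on {0..1} (Phi v \<sigma>)" unfolding eq by (rule base_fun(1)[OF assms(1) sm' As])
  show "(Phi v \<sigma> has_real_derivative x powr (\<sigma> - 1) * (1 + x) powr (-v)) (at x)"
    if "0 < x" "x < 1" for x unfolding eq by (rule base_fun(2)[OF assms(1) sm' As that])
  show "Phi v \<sigma> 0 = 0" by (simp add: Phi_def)
qed


lemma powr_id1:
  fixes x \<sigma> y :: real assumes x: "x > 0"
  shows "(x / (1 + x)) powr (\<sigma> - 1) * (1 - x / (1 + x)) powr (y - 1) * (1 / (1 + x)^2)
       = x powr (\<sigma> - 1) * (1 + x) powr (- (\<sigma> + y))"
proof -
  have p: "1 + x > 0" using x by simp
  have a: "(x / (1 + x)) powr (\<sigma> - 1) = x powr (\<sigma> - 1) / (1 + x) powr (\<sigma> - 1)"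
    using x p by (simp add: powr_divide)
  have b1: "1 - x / (1 + x) = 1 / (1 + x)" using p by (simp add: field_simps)
  have b: "(1 - x / (1 + x)) powr (y - 1) = 1 / (1 + x) powr (y - 1)"
    unfolding b1 using p by (simp add: powr_divide)
  have c: "(1 + x)^2 = (1 + x) powr 2" using p by (simp add: powr_realpow)
  have d: "(1 + x) powr (\<sigma> - 1) * (1 + x) powr (y - 1) * (1 + x) powr 2 = (1 + x) powr (\<sigma> + y)"
  proof -
    have "(1 + x) powr (\<sigma> - 1) * (1 + x) powr (y - 1) * (1 + x) powr 2 = (1 + x) powr ((\<sigma> - 1) + (y - 1) + 2)"
      by (simp only: powr_add)
    also have "(\<sigma> - 1) + (y - 1) + 2 = \<sigma> + y" by simp
    finally show ?thesis .
  qed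
  have e: "(1 + x) powr (- (\<sigma> + y)) = 1 / (1 + x) powr (\<sigma> + y)"
    by (simp only: powr_minus_divide)
  show ?thesis unfolding a b c e d[symmetric] by simp
qed

lemma step_i:
  fixes \<sigma> y :: real assumes "\<sigma> > 0" "y > 0" "\<sigma> + y < 1"
  shows "Phi (\<sigma> + y) \<sigma> 1 = Lf \<sigma> y (1/2)"
proof -
  define v where "v = \<sigma> + y"
  have v: "0 < v" "v < 1" using assms by (auto simp: v_def)
  have y1: "y < 1" using assms by simp
  define h where "h x = x / (1 + x)" for x :: real
  define D where "D x = Phi v \<sigma> x - Lf \<sigma> y (h x)" for x
  have hmap: "h x \<in> {0..1}" if "x \<in> {0..1}" for x using that by (auto simp: h_def field_simps)
  have ch: "continuous_on {0..1} h" unfolding h_def by (intro continuous_intros) auto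
  have cD: "continuous_on {0..1} D" unfolding D_def
    by (intro continuous_intros Phi_props(1)[OF assms(1) v] continuous_on_compose2[OF Lf_props(1)[OF assms(1,2) y1] ch])
       (use hmap in auto)
  have dD: "DERIV D x :> 0" if x: "0 < x" "x < 1" for x
  proof -
    have hx: "0 < h x" "h x < 1" using x by (auto simp: h_def field_simps)
    have dh: "(h has_real_derivative 1 / (1 + x)^2) (at x)" unfolding h_def
      using x by (auto intro!: derivative_eq_intros simp: field_simps power2_eq_square)
    have dL: "((\<lambda>x. Lf \<sigma> y (h x)) has_real_derivative
        (h x powr (\<sigma> - 1) * (1 - h x) powr (y - 1)) * (1 / (1 + x)^2)) (at x)"
      by (rule DERIV_chain2[OF Lf_props(2)[OF assms(1,2) y1 hx] dh])
    have dP: "(Phi v \<sigma> has_real_derivative x powr (\<sigma> - 1) * (1 + x) powr (-v)) (at x)"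
      by (rule Phi_props(2)[OF assms(1) v x])
    have "(D has_real_derivative x powr (\<sigma> - 1) * (1 + x) powr (-v) -
        (h x powr (\<sigma> - 1) * (1 - h x) powr (y - 1)) * (1 / (1 + x)^2)) (at x)"
      unfolding D_def by (rule DERIV_diff[OF dP dL])
    moreover have "(h x powr (\<sigma> - 1) * (1 - h x) powr (y - 1)) * (1 / (1 + x)^2) = x powr (\<sigma> - 1) * (1 + x) powr (-v)"
      unfolding h_def v_def by (rule powr_id1) (use x in simp)
    ultimately show ?thesis by simp
  qed
  have "D 1 = D 0" by (rule DERIV_isconst_end[OF _ cD dD]) auto
  moreover have "D 0 = 0" by (simp add: D_def h_def Phi_props(3)[OF assms(1) v] Lf_props(3)[OF assms(1,2) y1])
  ultimately show ?thesis by (simp add: D_def h_def v_def)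
qed

lemma step_ii:
  fixes \<sigma> y :: real assumes "0 < \<sigma>" "\<sigma> < 1" "0 < y" "y < 1"
  shows "Lf \<sigma> y (1/2) + Lf y \<sigma> (1/2) = Lf \<sigma> y 1"
proof -
  define E where "E u = Lf \<sigma> y u + Lf y \<sigma> (1 - u)" for u
  have c1: "continuous_on {1/2..1} (Lf \<sigma> y)"
    by (rule continuous_on_subset[OF Lf_props(1)[OF assms(1,3,4)]]) auto
  have c2: "continuous_on {1/2..1} (\<lambda>u. Lf y \<sigma> (1 - u))"
    by (rule continuous_on_compose2[OF Lf_props(1)[OF assms(3,1,2)]]) (auto intro!: continuous_intros)
  have cE: "continuous_on {1/2..1} E" unfolding E_def by (intro continuous_intros c1 c2)
  have dE: "DERIV E u :> 0" if u: "1/2 < u" "u < 1" for u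
  proof -
    have d1: "(Lf \<sigma> y has_real_derivative u powr (\<sigma> - 1) * (1 - u) powr (y - 1)) (at u)"
      by (rule Lf_props(2)[OF assms(1,3,4)]) (use u in auto)
    have d2: "((\<lambda>u. Lf y \<sigma> (1 - u)) has_real_derivative ((1 - u) powr (y - 1) * (1 - (1 - u)) powr (\<sigma> - 1)) * (-1)) (at u)"
      by (rule DERIV_chain2[OF Lf_props(2)[OF assms(3,1,2)]]) (use u in \<open>auto intro!: derivative_eq_intros\<close>)
    show ?thesis using DERIV_add[OF d1 d2] unfolding E_def by (simp add: mult_ac)
  qed
  have "E 1 = E (1/2)" by (rule DERIV_isconst_end[OF _ cE dE]) auto
  thus ?thesis by (simp add: E_def Lf_props(3)[OF assms(3,1,2)])
qed

lemma step_iii: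
  fixes \<sigma> y :: real assumes "0 < \<sigma>" "0 < y" "y < 1"
  shows "Lf \<sigma> y 1 = Beta \<sigma> y"
proof -
  have i1: "((\<lambda>u. u powr (\<sigma> - 1) * (1 - u) powr (y - 1)) has_integral (Lf \<sigma> y 1 - Lf \<sigma> y 0)) {0..1}"
  proof (rule fundamental_theorem_of_calculus_interior)
    show "continuous_on {0..1} (Lf \<sigma> y)" by (rule Lf_props(1)[OF assms])
    fix x assume x: "x \<in> {0<..<(1::real)}"
    have "(Lf \<sigma> y has_real_derivative x powr (\<sigma> - 1) * (1 - x) powr (y - 1)) (at x)"
      by (rule Lf_props(2)[OF assms]) (use x in auto)
    then show "(Lf \<sigma> y has_vector_derivative x powr (\<sigma> - 1) * (1 - x) powr (y - 1)) (at x)"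
      by (simp only: has_real_derivative_iff_has_vector_derivative)
  next
    show "0 \<le> (1::real)" by simp
  qed
  have i2: "((\<lambda>u. u powr (\<sigma> - 1) * (1 - u) powr (y - 1)) has_integral Beta \<sigma> y) {0..1}"
    by (rule has_integral_Beta_real) (use assms in auto)
  have "Lf \<sigma> y 1 - Lf \<sigma> y 0 = Beta \<sigma> y" by (rule has_integral_unique[OF i1 i2])
  thus ?thesis using Lf_props(3)[OF assms] by simp
qed

lemma sums_div_aux:
  fixes g :: "nat \<Rightarrow> real" assumes "\<sigma> > 0" "summable (\<lambda>n. \<bar>g n\<bar> / (real n + \<sigma>))"
  shows "(\<lambda>n. g n / (real n + \<sigma>)) sums (\<Sum>n. g n / (real n + \<sigma>))"
proof -
  have "norm (g n / (real n + \<sigma>)) = \<bar>g n\<bar> / (real n + \<sigma>)" for n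
  proof -
    have "real n + \<sigma> > 0" using assms(1) by simp
    thus ?thesis by (simp only: real_norm_def abs_divide abs_of_pos)
  qed
  hence eqn: "(\<lambda>n. norm (g n / (real n + \<sigma>))) = (\<lambda>n. \<bar>g n\<bar> / (real n + \<sigma>))" by (rule ext)
  have "summable (\<lambda>n. norm (g n / (real n + \<sigma>)))" unfolding eqn by (rule assms(2))
  thus ?thesis by (rule summable_sums[OF summable_norm_cancel])
qed

lemma real_base:
  fixes \<sigma> y :: real assumes "\<sigma> > 0" "y > 0" "\<sigma> + y < 1"
  shows "(\<lambda>n. ((-(\<sigma>+y)) gchoose n) * (1 / (real n + \<sigma>) + 1 / (real n + y))) sums Beta \<sigma> y"
proof -
  have v: "0 < \<sigma> + y" "\<sigma> + y < 1" using assms by auto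
  have v': "0 < y + \<sigma>" "y + \<sigma> < 1" using assms by auto
  have p1: "Phi (\<sigma>+y) \<sigma> 1 = (\<Sum>n. ((-(\<sigma>+y)) gchoose n) / (real n + \<sigma>))" by (simp add: Phi_def)
  have p2: "Phi (y+\<sigma>) y 1 = (\<Sum>n. ((-(y+\<sigma>)) gchoose n) / (real n + y))" by (simp add: Phi_def)
  have s1: "(\<lambda>n. ((-(\<sigma>+y)) gchoose n) / (real n + \<sigma>)) sums Phi (\<sigma>+y) \<sigma> 1"
    unfolding p1 by (rule sums_div_aux[OF assms(1) Phi_props(4)[OF assms(1) v]])
  have s2: "(\<lambda>n. ((-(y+\<sigma>)) gchoose n) / (real n + y)) sums Phi (y+\<sigma>) y 1"
    unfolding p2 by (rule sums_div_aux[OF assms(2) Phi_props(4)[OF assms(2) v']])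
  have "Phi (\<sigma>+y) \<sigma> 1 + Phi (y+\<sigma>) y 1 = Lf \<sigma> y (1/2) + Lf y \<sigma> (1/2)"
    using step_i[OF assms] step_i[OF assms(2,1)] v' by simp
  also have "\<dots> = Lf \<sigma> y 1" by (rule step_ii) (use assms in auto)
  also have "\<dots> = Beta \<sigma> y" by (rule step_iii) (use assms in auto)
  finally have e: "Phi (\<sigma>+y) \<sigma> 1 + Phi (y+\<sigma>) y 1 = Beta \<sigma> y" .
  have yc: "y + \<sigma> = \<sigma> + y" by simp
  have e2: "Phi (\<sigma>+y) \<sigma> 1 + Phi (\<sigma>+y) y 1 = Beta \<sigma> y" using e unfolding yc .
  have ss: "(\<lambda>n. ((-(\<sigma>+y)) gchoose n) / (real n + \<sigma>) + ((-(\<sigma>+y)) gchoose n) / (real n + y)) sums Beta \<sigma> y"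
    using sums_add[OF s1 s2] unfolding yc e2 .
  have eq: "(\<lambda>n. ((-(\<sigma>+y)) gchoose n) / (real n + \<sigma>) + ((-(\<sigma>+y)) gchoose n) / (real n + y))
     = (\<lambda>n. ((-(\<sigma>+y)) gchoose n) * (1 / (real n + \<sigma>) + 1 / (real n + y)))"
    by (simp add: distrib_left)
  show ?thesis using ss unfolding eq .
qed


definition cc :: "complex \<Rightarrow> nat \<Rightarrow> complex" where
  "cc v n = (-1)^n * pochhammer v n / fact n"

definition tt :: "complex \<Rightarrow> complex \<Rightarrow> nat \<Rightarrow> complex" where
  "tt v \<sigma> n = cc v n * (1 / (of_nat n + \<sigma>) + 1 / (of_nat n + v - \<sigma>))"

lemma poch_nonneg0: "0 \<le> (a::real) \<Longrightarrow> 0 \<le> pochhammer a k"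
  by (induction k) (auto simp: pochhammer_Suc)

lemma norm_poch_le:
  fixes z :: complex and a :: real
  assumes "\<And>i. i < k \<Longrightarrow> norm (z + of_nat i) \<le> a + of_nat i" "0 \<le> a"
  shows "norm (pochhammer z k) \<le> pochhammer a k"
  using assms
proof (induction k)
  case 0 then show ?case by simp
next
  case (Suc k)
  have "norm (pochhammer z (Suc k)) = norm (pochhammer z k) * norm (z + of_nat k)"
    by (simp add: pochhammer_Suc norm_mult)
  also have "\<dots> \<le> pochhammer a k * (a + of_nat k)"
    using Suc by (intro mult_mono) (auto intro: poch_nonneg0)
  also have "\<dots> = pochhammer a (Suc k)" by (simp add: pochhammer_Suc)
  finally show ?case .
qed

lemma norm_shift_bound:
  fixes v :: complex and R r \<rho> :: real and j :: nat
  assumes "norm v \<le> R" "Re v \<le> r" "r < \<rho>"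
    and "real j \<ge> R" "real j \<ge> R^2 / (\<rho> - r) + \<bar>\<rho>\<bar> + \<bar>r\<bar>"
  shows "norm (v + of_nat j) \<le> \<rho> + real j"
proof -
  have d: "\<rho> - r > 0" using assms by simp
  have re: "Re (v + of_nat j) = Re v + real j" by simp
  have im: "Im (v + of_nat j) = Im v" by simp
  have "\<bar>Re v\<bar> \<le> R" using abs_Re_le_cmod[of v] assms by linarith
  hence r0: "0 \<le> Re v + real j" using assms by linarith
  have r1: "Re v + real j \<le> r + real j" using assms by simp
  have "(Re v + real j)^2 \<le> (r + real j)^2" using r0 r1 by (intro power_mono) auto
  moreover have "(Im v)^2 \<le> R^2"
  proof -
    have "\<bar>Im v\<bar> \<le> R" using abs_Im_le_cmod[of v] assms by linarith
    thus ?thesis by (metis abs_ge_zero power2_abs power_mono)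
  qed
  moreover have "(r + real j)^2 + R^2 \<le> (\<rho> + real j)^2"
  proof -
    have "R^2 / (\<rho> - r) \<ge> 0" using d by simp
    have "R^2 / (\<rho> - r) \<le> real j" using assms(5) by linarith
    hence "R^2 \<le> (\<rho> - r) * real j" using d by (simp add: divide_le_eq mult.commute)
    also have "\<dots> \<le> (\<rho> - r) * (\<rho> + r + 2 * real j)"
      using d assms(5) abs_ge_minus_self[of \<rho>] abs_ge_minus_self[of r] \<open>R^2 / (\<rho> - r) \<ge> 0\<close>
      by (intro mult_left_mono) linarith+
    finally show ?thesis by (simp add: power2_eq_square algebra_simps)
  qed
  ultimately have "(norm (v + of_nat j))^2 \<le> (\<rho> + real j)^2"
    unfolding cmod_power2 re im by linarith
  moreover have "0 \<le> \<rho> + real j"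
    using assms(5) abs_ge_minus_self[of \<rho>] abs_ge_minus_self[of r] divide_nonneg_pos[OF zero_le_power2[of R] d] by linarith
  ultimately show ?thesis by (rule power2_le_imp_le)
qed

lemma cc_bound:
  fixes R r :: real assumes "R \<ge> 0" "r < 2"
  shows "\<exists>\<rho> K N0. \<rho> < 2 \<and> \<rho> > 0 \<and> (\<forall>v n. norm v \<le> R \<longrightarrow> Re v \<le> r \<longrightarrow> n \<ge> N0 \<longrightarrow>
            norm (cc v n) \<le> K * real n powr (\<rho> - 1))"
proof -
  define \<rho> where "\<rho> = (max r 0 + 2) / 2"
  have \<rho>: "\<rho> < 2" "\<rho> > 0" "r < \<rho>" using assms by (auto simp: \<rho>_def)
  define J where "J = nat \<lceil>R + R^2 / (\<rho> - r) + \<bar>\<rho>\<bar> + \<bar>r\<bar>\<rceil>"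
  have J1: "real J \<ge> R" "real J \<ge> R^2 / (\<rho> - r) + \<bar>\<rho>\<bar> + \<bar>r\<bar>"
  proof -
    have "R^2 / (\<rho> - r) \<ge> 0" using \<rho> by simp
    hence "R + R^2 / (\<rho> - r) + \<bar>\<rho>\<bar> + \<bar>r\<bar> \<le> real J" unfolding J_def by linarith
    thus "real J \<ge> R" "real J \<ge> R^2 / (\<rho> - r) + \<bar>\<rho>\<bar> + \<bar>r\<bar>"
      using \<open>R^2 / (\<rho> - r) \<ge> 0\<close> assms by linarith+
  qed
  obtain C where C: "C > 0" "\<And>n. n \<ge> 1 \<Longrightarrow> pochhammer \<rho> n / fact n \<le> C * real n powr (\<rho> - 1)"
    using poch_bound_real[OF \<rho>(2)] by auto
  define Kp where "Kp = pochhammer R J / pochhammer \<rho> J"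
  have pJ: "pochhammer \<rho> J > 0" using \<rho> by (intro pochhammer_pos)
  have Kp0: "Kp \<ge> 0" unfolding Kp_def using pJ assms by (intro divide_nonneg_pos poch_nonneg0) auto
  have main: "norm (cc v n) \<le> Kp * C * real n powr (\<rho> - 1)"
    if v: "norm v \<le> R" "Re v \<le> r" and n: "max J 1 \<le> n" for v n
  proof -
    have nJ: "J \<le> n" using n by simp
    have p1: "norm (pochhammer v J) \<le> pochhammer R J"
    proof (rule norm_poch_le)
      fix i assume "i < J"
      have "norm (v + of_nat i) \<le> norm v + norm (of_nat i :: complex)" by (rule norm_triangle_ineq)
      thus "norm (v + of_nat i) \<le> R + of_nat i" using v by simp
    qed (use assms in auto)
    have p2: "norm (pochhammer (v + of_nat J) (n - J)) \<le> pochhammer (\<rho> + of_nat J) (n - J)"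
    proof (rule norm_poch_le)
      fix i assume "i < n - J"
      have "norm (v + of_nat (J + i)) \<le> \<rho> + real (J + i)"
        by (rule norm_shift_bound[OF v \<rho>(3)]) (use J1 in auto)
      thus "norm (v + of_nat J + of_nat i) \<le> \<rho> + of_nat J + of_nat i" by (simp add: add.assoc)
    qed (use \<rho> in auto)
    have "norm (pochhammer v n) = norm (pochhammer v J) * norm (pochhammer (v + of_nat J) (n - J))"
      using pochhammer_product[OF nJ, of v] by (simp add: norm_mult)
    also have "\<dots> \<le> pochhammer R J * pochhammer (\<rho> + of_nat J) (n - J)"
      by (intro mult_mono p1 p2) (auto intro: poch_nonneg0 simp: assms)
    also have "\<dots> = Kp * pochhammer \<rho> n"
      using pochhammer_product[OF nJ, of \<rho>] pJ by (simp add: Kp_def)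
    finally have pv: "norm (pochhammer v n) \<le> Kp * pochhammer \<rho> n" .
    have "norm (cc v n) = norm (pochhammer v n) / fact n"
      by (simp add: cc_def norm_mult norm_divide norm_power)
    also have "\<dots> \<le> Kp * pochhammer \<rho> n / fact n"
      using pv by (intro divide_right_mono) auto
    also have "\<dots> \<le> Kp * (C * real n powr (\<rho> - 1))"
      using mult_left_mono[OF C(2)[of n] Kp0] n by (simp add: mult_ac)
    finally have "norm (cc v n) \<le> Kp * (C * real n powr (\<rho> - 1))" .
    thus "norm (cc v n) \<le> Kp * C * real n powr (\<rho> - 1)" by (simp only: mult.assoc)
  qed
  show ?thesis using main \<rho> by blast
qed


definition hh :: "complex \<Rightarrow> nat \<Rightarrow> complex \<Rightarrow> complex" where
  "hh v n w = (of_nat n * (2 - v) + 1 + w - v * w) / ((of_nat n + w) * (of_nat n + 1) * (of_nat n + 1 + w))"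

lemma cc_Suc: "cc v (Suc n) = cc v n * (- (v + of_nat n) / (of_nat n + 1))"
  by (simp add: cc_def pochhammer_Suc field_simps)

lemma hh_eq:
  assumes "of_nat n + w \<noteq> (0::complex)" "of_nat n + 1 + w \<noteq> 0"
  shows "1 / (of_nat n + w) - (v + of_nat n) / (of_nat n + 1) * (1 / (of_nat n + 1 + w)) = hh v n w"
proof -
  have n1: "(of_nat n + 1 :: complex) \<noteq> 0" by (metis of_nat_Suc of_nat_eq_0_iff add.commute nat.distinct(1))
  have "1 / (of_nat n + w) - (v + of_nat n) / (of_nat n + 1) * (1 / (of_nat n + 1 + w))
      = 1 / (of_nat n + w) - (v + of_nat n) / ((of_nat n + 1) * (of_nat n + 1 + w))" by simp
  also have "\<dots> = (1 * ((of_nat n + 1) * (of_nat n + 1 + w)) - (v + of_nat n) * (of_nat n + w)) /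
      ((of_nat n + w) * ((of_nat n + 1) * (of_nat n + 1 + w)))"
    by (rule diff_frac_eq) (use assms n1 in auto)
  also have "(1 * ((of_nat n + 1) * (of_nat n + 1 + w)) - (v + of_nat n) * (of_nat n + w))
      = of_nat n * (2 - v) + 1 + w - v * w" by (simp add: algebra_simps)
  also have "(of_nat n + w) * ((of_nat n + 1) * (of_nat n + 1 + w)) = (of_nat n + w) * (of_nat n + 1) * (of_nat n + 1 + w)"
    by (simp only: mult.assoc)
  finally show ?thesis unfolding hh_def .
qed

lemma ring_aux: "(c::complex) * (a + b) + c * (- q) * (a' + b') = c * ((a - q * a') + (b - q * b'))"
  by (simp add: algebra_simps)

lemma tt_pair:
  assumes "of_nat n + \<sigma> \<noteq> (0::complex)" "of_nat n + 1 + \<sigma> \<noteq> 0"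
    and "of_nat n + (v - \<sigma>) \<noteq> 0" "of_nat n + 1 + (v - \<sigma>) \<noteq> 0"
  shows "tt v \<sigma> n + tt v \<sigma> (Suc n) = cc v n * (hh v n \<sigma> + hh v n (v - \<sigma>))"
proof -
  have a: "of_nat n + v - \<sigma> = of_nat n + (v - \<sigma>)" "of_nat (Suc n) + v - \<sigma> = of_nat n + 1 + (v - \<sigma>)"
    "(of_nat (Suc n) :: complex) + \<sigma> = of_nat n + 1 + \<sigma>" by simp_all
  have "tt v \<sigma> n + tt v \<sigma> (Suc n) = cc v n * ((1 / (of_nat n + \<sigma>) - (v + of_nat n) / (of_nat n + 1) * (1 / (of_nat n + 1 + \<sigma>)))
      + (1 / (of_nat n + (v - \<sigma>)) - (v + of_nat n) / (of_nat n + 1) * (1 / (of_nat n + 1 + (v - \<sigma>)))))"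
    unfolding tt_def cc_Suc a minus_divide_left[symmetric] by (rule ring_aux)
  also have "\<dots> = cc v n * (hh v n \<sigma> + hh v n (v - \<sigma>))" by (simp only: hh_eq[OF assms(1,2)] hh_eq[OF assms(3,4)])
  finally show ?thesis .
qed

lemma norm_nat_plus_ge: "norm (of_nat n + w :: complex) \<ge> real n - norm w"
  using norm_diff_ineq[of "of_nat n :: complex" w] by simp

lemma hh_bound:
  fixes R :: real
  assumes "norm v \<le> R" "norm w \<le> 2 * R" "real n \<ge> 4 * R" "n \<ge> 1"
  shows "norm (hh v n w) \<le> 8 * (1 + R + R^2) / (real n)^2"
proof -
  have R0: "R \<ge> 0" using assms(1) norm_ge_zero[of v] by linarith
  have n0: "real n > 0" using assms by simp
  have d1: "norm (of_nat n + w) \<ge> real n / 2" using norm_nat_plus_ge[of n w] assms by linarith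
  have d2: "norm (of_nat n + 1 + w) \<ge> real n / 2"
    using norm_nat_plus_ge[of "Suc n" w] assms by (simp add: add_ac)
  have d3: "norm (of_nat n + 1 :: complex) = real n + 1"
    by (metis norm_of_nat of_nat_Suc add.commute)
  have num: "norm (of_nat n * (2 - v) + 1 + w - v * w) \<le> (real n + 1) * (2 + 2*R + 2*R^2)"
  proof -
    have t1: "norm (of_nat n * (2 - v) + 1 + w - v * w) \<le> norm (of_nat n * (2 - v) + 1 + w) + norm (v * w)"
      by (rule norm_triangle_ineq4)
    have t2: "norm (of_nat n * (2 - v) + 1 + w) \<le> norm (of_nat n * (2 - v) + 1) + norm w"
      by (rule norm_triangle_ineq)
    have t3: "norm (of_nat n * (2 - v) + 1) \<le> norm (of_nat n * (2 - v)) + norm (1::complex)"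
      by (rule norm_triangle_ineq)
    have "norm (of_nat n * (2 - v) + 1 + w - v * w) \<le> norm (of_nat n * (2 - v)) + norm (1::complex) + norm w + norm (v * w)"
      using t1 t2 t3 by linarith
    also have "norm (of_nat n * (2 - v)) \<le> real n * (2 + R)"
    proof -
      have "norm (2 - v) \<le> 2 + R" using norm_triangle_ineq4[of 2 v] assms(1) by simp
      thus ?thesis by (simp add: norm_mult mult_left_mono)
    qed
    also have "norm (v * w) \<le> R * (2 * R)" unfolding norm_mult
      using assms R0 by (intro mult_mono) auto
    finally have "norm (of_nat n * (2 - v) + 1 + w - v * w) \<le> real n * (2 + R) + 1 + 2 * R + 2 * R^2"
      using assms(2) by (simp add: power2_eq_square)
    also have "\<dots> \<le> (real n + 1) * (2 + 2*R + 2*R^2)"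
    proof -
      have e: "(real n + 1) * (2 + 2*R + 2*R^2) = real n * (2 + R) + 1 + 2*R + 2*R^2 + (real n * (R + 2 * R^2) + 1)"
        by (simp add: algebra_simps)
      have "0 \<le> real n * (R + 2 * R^2)" using R0 by simp
      thus ?thesis unfolding e by linarith
    qed
    finally show ?thesis .
  qed
  have den: "norm ((of_nat n + w) * (of_nat n + 1) * (of_nat n + 1 + w)) \<ge> (real n / 2) * (real n + 1) * (real n / 2)"
    unfolding norm_mult d3 using d1 d2 n0 by (intro mult_mono) auto
  have "norm (hh v n w) = norm (of_nat n * (2 - v) + 1 + w - v * w) / norm ((of_nat n + w) * (of_nat n + 1) * (of_nat n + 1 + w))"
    by (simp add: hh_def norm_divide)
  also have "\<dots> \<le> ((real n + 1) * (2 + 2*R + 2*R^2)) / ((real n / 2) * (real n + 1) * (real n / 2))"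
    by (rule frac_le[OF _ num _ den]) (use n0 R0 in auto)
  also have "\<dots> = 8 * (1 + R + R^2) / (real n)^2"
  proof -
    have "(real n / 2) * (real n + 1) * (real n / 2) = (real n + 1) * ((real n)^2 / 4)"
      by (simp add: power2_eq_square)
    hence "((real n + 1) * (2 + 2*R + 2*R^2)) / ((real n / 2) * (real n + 1) * (real n / 2))
        = (2 + 2*R + 2*R^2) / ((real n)^2 / 4)"
      using n0 by simp
    also have "\<dots> = 8 * (1 + R + R^2) / (real n)^2"
      by (simp add: divide_divide_eq_right algebra_simps)
    finally show ?thesis .
  qed
  finally show ?thesis .
qed

lemma tt_pair_bound:
  fixes R :: real
  assumes "norm v \<le> R" "norm \<sigma> \<le> R" "real n \<ge> 4 * R" "n \<ge> 1"
  shows "norm (tt v \<sigma> n + tt v \<sigma> (Suc n)) \<le> norm (cc v n) * (16 * (1 + R + R^2) / (real n)^2)"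
proof -
  have R0: "R \<ge> 0" using assms(1) norm_ge_zero[of v] by linarith
  have w2: "norm (v - \<sigma>) \<le> 2 * R" using norm_triangle_ineq4[of v \<sigma>] assms by linarith
  have s2: "norm \<sigma> \<le> 2 * R" using assms R0 by linarith
  have nz: "of_nat n + w \<noteq> 0" "of_nat n + 1 + w \<noteq> 0" if "norm w \<le> 2 * R" for w :: complex
  proof -
    have "norm (of_nat n + w) \<ge> real n - norm w" by (rule norm_nat_plus_ge)
    moreover have "norm (of_nat (Suc n) + w) \<ge> real (Suc n) - norm w" by (rule norm_nat_plus_ge)
    ultimately show "of_nat n + w \<noteq> 0" "of_nat n + 1 + w \<noteq> 0" using that assms by (auto simp: add_ac)
  qed
  have "norm (tt v \<sigma> n + tt v \<sigma> (Suc n)) = norm (cc v n) * norm (hh v n \<sigma> + hh v n (v - \<sigma>))"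
    using tt_pair[OF nz[OF s2] nz[OF w2]] by (simp add: norm_mult)
  also have "\<dots> \<le> norm (cc v n) * (8 * (1 + R + R^2) / (real n)^2 + 8 * (1 + R + R^2) / (real n)^2)"
    using hh_bound[OF assms(1) s2 assms(3,4)] hh_bound[OF assms(1) w2 assms(3,4)]
    by (intro mult_left_mono order.trans[OF norm_triangle_ineq] add_mono) auto
  also have "\<dots> = norm (cc v n) * (16 * (1 + R + R^2) / (real n)^2)" by simp
  finally show ?thesis .
qed

lemma tt_single_bound:
  fixes R :: real
  assumes "norm v \<le> R" "norm \<sigma> \<le> R" "real n \<ge> 4 * R" "n \<ge> 1"
  shows "norm (tt v \<sigma> n) \<le> norm (cc v n) * (4 / real n)"
proof -
  have R0: "R \<ge> 0" using assms(1) norm_ge_zero[of v] by linarith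
  have n0: "real n > 0" using assms by simp
  have w2: "norm (v - \<sigma>) \<le> 2 * R" using norm_triangle_ineq4[of v \<sigma>] assms by linarith
  have b: "norm (1 / (of_nat n + w)) \<le> 2 / real n" if "norm w \<le> 2 * R" for w :: complex
  proof -
    have "norm (of_nat n + w) \<ge> real n / 2" using norm_nat_plus_ge[of n w] that assms by linarith
    thus ?thesis using n0 by (simp add: norm_divide divide_simps)
  qed
  have e: "of_nat n + v - \<sigma> = of_nat n + (v - \<sigma>)" by simp
  have "norm (tt v \<sigma> n) \<le> norm (cc v n) * (2 / real n + 2 / real n)"
    unfolding tt_def norm_mult e using b[of \<sigma>] b[OF w2] assms R0
    by (intro mult_left_mono order.trans[OF norm_triangle_ineq] add_mono) auto
  thus ?thesis by simp
qed


lemma sum_pairs: "(\<Sum>n<2*m. t n) = (\<Sum>i<m. t (2*i) + t (Suc (2*i)))"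
  by (induction m) (simp_all add: algebra_simps)

lemma unif_pairs:
  fixes t :: "nat \<Rightarrow> 'a \<Rightarrow> complex"
  assumes P: "uniform_limit A (\<lambda>m x. \<Sum>i<m. t (2*i) x + t (Suc (2*i)) x) g sequentially"
    and Z: "\<And>e. e > 0 \<Longrightarrow> \<exists>N. \<forall>n\<ge>N. \<forall>x\<in>A. norm (t n x) < e"
  shows "uniform_limit A (\<lambda>N x. \<Sum>n<N. t n x) g sequentially"
  unfolding uniform_limit_sequentially_iff
proof (intro allI impI)
  fix e :: real assume e: "e > 0"
  obtain M where M: "\<And>m x. m \<ge> M \<Longrightarrow> x \<in> A \<Longrightarrow> dist (\<Sum>i<m. t (2*i) x + t (Suc (2*i)) x) (g x) < e/2"
    using P e unfolding uniform_limit_sequentially_iff by (meson half_gt_zero)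
  obtain N where N: "\<And>n x. n \<ge> N \<Longrightarrow> x \<in> A \<Longrightarrow> norm (t n x) < e/2"
    using Z[of "e/2"] e by auto
  show "\<exists>N. \<forall>n\<ge>N. \<forall>x\<in>A. dist (\<Sum>n<n. t n x) (g x) < e"
  proof (intro exI[of _ "2*M + N + 1"] allI impI ballI)
    fix n x assume n: "2*M + N + 1 \<le> n" and x: "x \<in> A"
    define m where "m = n div 2"
    have mM: "m \<ge> M" using n unfolding m_def by linarith
    have S2: "(\<Sum>k<2*m. t k x) = (\<Sum>i<m. t (2*i) x + t (Suc (2*i)) x)" by (rule sum_pairs)
    show "dist (\<Sum>k<n. t k x) (g x) < e"
    proof (cases "even n")
      case True
      hence "n = 2*m" unfolding m_def by simp
      thus ?thesis using M[OF mM x] S2 e by simp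
    next
      case False
      hence nn: "n = Suc (2*m)" unfolding m_def by presburger
      have "(\<Sum>k<n. t k x) = (\<Sum>k<2*m. t k x) + t (2*m) x" unfolding nn by simp
      hence "dist (\<Sum>k<n. t k x) (g x) \<le> dist (\<Sum>k<2*m. t k x) (g x) + norm (t (2*m) x)"
        by (simp add: dist_norm) (metis add.commute add_diff_eq norm_triangle_ineq order_trans
             diff_add_eq eq_iff)
      moreover have "norm (t (2*m) x) < e/2" by (rule N) (use n nn x in auto)
      ultimately show ?thesis using M[OF mM x] S2 by simp
    qed
  qed
qed

lemma tt_uniform:
  fixes V S :: "'a \<Rightarrow> complex" and R r :: real
  assumes R: "R \<ge> 0" and r: "r < 2"
    and bV: "\<And>x. x \<in> A \<Longrightarrow> norm (V x) \<le> R" and bS: "\<And>x. x \<in> A \<Longrightarrow> norm (S x) \<le> R"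
    and rV: "\<And>x. x \<in> A \<Longrightarrow> Re (V x) \<le> r"
  shows "uniform_limit A (\<lambda>N x. \<Sum>n<N. tt (V x) (S x) n) (\<lambda>x. \<Sum>n. tt (V x) (S x) n) sequentially"
    and "\<And>x. x \<in> A \<Longrightarrow> tt (V x) (S x) sums (\<Sum>n. tt (V x) (S x) n)"
proof -
  obtain \<rho> K N0 where \<rho>: "\<rho> < 2" "\<rho> > 0"
    and K: "\<And>v n. norm v \<le> R \<Longrightarrow> Re v \<le> r \<Longrightarrow> n \<ge> N0 \<Longrightarrow> norm (cc v n) \<le> K * real n powr (\<rho> - 1)"
    using cc_bound[OF R r] by blast
  define N1 where "N1 = max N0 (max 1 (nat \<lceil>4 * R\<rceil>))"
  have N1: "n \<ge> N0" "n \<ge> 1" "real n \<ge> 4 * R" if "n \<ge> N1" for n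
    using that unfolding N1_def by (auto simp: nat_le_iff) (linarith)
  define B where "B = 16 * (1 + R + R^2)"
  have B0: "B \<ge> 0" unfolding B_def using R by simp
  define t where "t n x = tt (V x) (S x) n" for n x
  define M where "M m = K * B * 2 powr (\<rho> - 3) * real m powr (\<rho> - 3)" for m
  have smM: "summable M" unfolding M_def using \<rho> by (intro summable_mult) (simp add: summable_real_powr_iff)
  have evP: "\<forall>\<^sub>F m in sequentially. \<forall>x\<in>A. norm (t (2*m) x + t (Suc (2*m)) x) \<le> M m"
    using eventually_ge_at_top[of N1]
  proof eventually_elim
    case (elim m)
    show ?case
    proof
      fix x assume x: "x \<in> A"
      have m2: "2*m \<ge> N1" using elim by simp
      have pos: "real (2*m) > 0" using N1(2)[OF m2] by simp
      have "norm (t (2*m) x + t (Suc (2*m)) x) \<le> norm (cc (V x) (2*m)) * (B / (real (2*m))^2)"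
        unfolding t_def B_def by (rule tt_pair_bound[OF bV[OF x] bS[OF x] N1(3)[OF m2] N1(2)[OF m2]])
      also have "\<dots> \<le> (K * real (2*m) powr (\<rho> - 1)) * (B / (real (2*m))^2)"
        by (rule mult_right_mono[OF K[OF bV[OF x] rV[OF x] N1(1)[OF m2]]]) (use B0 in simp)
      also have "\<dots> = K * B * (real (2*m) powr (\<rho> - 1) / real (2*m) powr 2)"
        using pos by (simp add: powr_realpow)
      also have "real (2*m) powr (\<rho> - 1) / real (2*m) powr 2 = real (2*m) powr (\<rho> - 3)"
        by (simp only: powr_diff[symmetric]) (simp add: algebra_simps)
      also have "real (2*m) powr (\<rho> - 3) = 2 powr (\<rho> - 3) * real m powr (\<rho> - 3)"
        by (simp add: powr_mult)
      finally show "norm (t (2*m) x + t (Suc (2*m)) x) \<le> M m" by (simp add: M_def mult_ac)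
    qed
  qed
  have P: "uniform_limit A (\<lambda>m x. \<Sum>i<m. t (2*i) x + t (Suc (2*i)) x) (\<lambda>x. \<Sum>i. t (2*i) x + t (Suc (2*i)) x) sequentially"
    by (rule Weierstrass_m_test_ev[OF evP smM])
  have lim0: "(\<lambda>n. 4 * K * real n powr (\<rho> - 2)) \<longlonglongrightarrow> 0"
    using tendsto_mult[OF tendsto_const[of "4 * K"] tendsto_neg_powr[OF _ filterlim_real_sequentially, of "\<rho> - 2"]] \<rho>
    by simp
  have Z: "\<exists>N. \<forall>n\<ge>N. \<forall>x\<in>A. norm (t n x) < e" if e: "e > 0" for e
  proof -
    obtain N2 where N2: "\<And>n. n \<ge> N2 \<Longrightarrow> norm (4 * K * real n powr (\<rho> - 2) - 0) < e"
      using LIMSEQ_D[OF lim0 e] by blast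
    show ?thesis
    proof (intro exI[of _ "max N1 N2"] allI impI ballI)
      fix n x assume n: "max N1 N2 \<le> n" and x: "x \<in> A"
      have nN1: "n \<ge> N1" using n by simp
      have pos: "real n > 0" using N1(2)[OF nN1] by simp
      have "norm (t n x) \<le> norm (cc (V x) n) * (4 / real n)"
        unfolding t_def by (rule tt_single_bound[OF bV[OF x] bS[OF x] N1(3)[OF nN1] N1(2)[OF nN1]])
      also have "\<dots> \<le> (K * real n powr (\<rho> - 1)) * (4 / real n)"
        by (rule mult_right_mono[OF K[OF bV[OF x] rV[OF x] N1(1)[OF nN1]]]) simp
      also have "\<dots> = 4 * K * (real n powr (\<rho> - 1) / real n powr 1)" using pos by simp
      also have "real n powr (\<rho> - 1) / real n powr 1 = real n powr (\<rho> - 2)"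
        by (simp only: powr_diff[symmetric]) (simp add: algebra_simps)
      also have "4 * K * real n powr (\<rho> - 2) \<le> norm (4 * K * real n powr (\<rho> - 2) - 0)" by simp
      also have "\<dots> < e" using N2 n by simp
      finally show "norm (t n x) < e" .
    qed
  qed
  have U: "uniform_limit A (\<lambda>N x. \<Sum>n<N. t n x) (\<lambda>x. \<Sum>i. t (2*i) x + t (Suc (2*i)) x) sequentially"
    by (rule unif_pairs[OF P Z])
  have su: "t' sums (\<Sum>i. t (2*i) x + t (Suc (2*i)) x)" if x: "x \<in> A" and "t' = (\<lambda>n. t n x)" for x t'
    using tendsto_uniform_limitI[OF U x] that(2) unfolding sums_def by simp
  have eq: "(\<Sum>i. t (2*i) x + t (Suc (2*i)) x) = (\<Sum>n. tt (V x) (S x) n)" if x: "x \<in> A" for x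
    using sums_unique[OF su[OF x, of "tt (V x) (S x)"]] by (simp add: t_def fun_eq_iff)
  show "uniform_limit A (\<lambda>N x. \<Sum>n<N. tt (V x) (S x) n) (\<lambda>x. \<Sum>n. tt (V x) (S x) n) sequentially"
    using U unfolding t_def by (rule uniform_limit_cong'[THEN iffD1, rotated 2]) (auto simp: eq[unfolded t_def])
  show "tt (V x) (S x) sums (\<Sum>n. tt (V x) (S x) n)" if "x \<in> A" for x
    using su[OF that, of "tt (V x) (S x)"] eq[OF that] by (simp add: t_def fun_eq_iff)
qed


definition Gs :: "complex \<Rightarrow> complex \<Rightarrow> complex" where
  "Gs v \<sigma> = (\<Sum>n. tt v \<sigma> n)"

definition Bc :: "complex \<Rightarrow> complex \<Rightarrow> complex" where
  "Bc v \<sigma> = Gamma \<sigma> * Gamma (v - \<sigma>) * rGamma v"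

lemma closed_shift_npi: "closed {\<sigma>::complex. v - \<sigma> \<in> \<int>\<^sub>\<le>\<^sub>0}"
proof -
  have "{\<sigma>::complex. v - \<sigma> \<in> \<int>\<^sub>\<le>\<^sub>0} = (\<lambda>\<sigma>. v - \<sigma>) -` \<int>\<^sub>\<le>\<^sub>0" by auto
  also have "closed \<dots>" by (rule continuous_closed_vimage) (auto intro!: continuous_intros)
  finally show ?thesis .
qed

lemma countable_npi: "countable (\<int>\<^sub>\<le>\<^sub>0 :: complex set)"
proof -
  have "(\<int>\<^sub>\<le>\<^sub>0 :: complex set) \<subseteq> range of_int" by (auto elim!: nonpos_Ints_cases)
  thus ?thesis by (rule countable_subset) simp
qed

lemma countable_shift_npi: "countable {\<sigma>::complex. v - \<sigma> \<in> \<int>\<^sub>\<le>\<^sub>0}"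
proof -
  have "{\<sigma>::complex. v - \<sigma> \<in> \<int>\<^sub>\<le>\<^sub>0} \<subseteq> (\<lambda>z. v - z) ` \<int>\<^sub>\<le>\<^sub>0" by (auto intro: image_eqI[of _ _ "v - _"])
  thus ?thesis by (rule countable_subset) (simp add: countable_npi)
qed

lemma tt_holo:
  assumes "\<And>\<sigma>. \<sigma> \<in> A \<Longrightarrow> \<sigma> \<notin> \<int>\<^sub>\<le>\<^sub>0" "\<And>\<sigma>. \<sigma> \<in> A \<Longrightarrow> v - \<sigma> \<notin> \<int>\<^sub>\<le>\<^sub>0"
  shows "(\<lambda>\<sigma>. tt v \<sigma> n) holomorphic_on A"
proof -
  have "of_nat n + \<sigma> \<noteq> 0" if "\<sigma> \<in> A" for \<sigma>
  proof
    assume "of_nat n + \<sigma> = 0"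
    hence "\<sigma> = - of_nat n" by (simp add: add_eq_0_iff2)
    thus False using assms(1)[OF that] by simp
  qed
  moreover have "of_nat n + v - \<sigma> \<noteq> 0" if "\<sigma> \<in> A" for \<sigma>
  proof
    assume "of_nat n + v - \<sigma> = 0"
    hence "v - \<sigma> = - of_nat n" by (simp add: algebra_simps)
    thus False using assms(2)[OF that] by simp
  qed
  ultimately show ?thesis unfolding tt_def by (auto intro!: holomorphic_intros)
qed

lemma tt_holo_v:
  assumes "\<And>v. v \<in> A \<Longrightarrow> v - \<sigma> \<notin> \<int>\<^sub>\<le>\<^sub>0" "\<sigma> \<notin> \<int>\<^sub>\<le>\<^sub>0"
  shows "(\<lambda>v. tt v \<sigma> n) holomorphic_on A"
proof -
  have "of_nat n + \<sigma> \<noteq> 0"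
  proof
    assume "of_nat n + \<sigma> = 0"
    hence "\<sigma> = - of_nat n" by (simp add: add_eq_0_iff2)
    thus False using assms(2) by simp
  qed
  moreover have "of_nat n + v - \<sigma> \<noteq> 0" if "v \<in> A" for v
  proof
    assume "of_nat n + v - \<sigma> = 0"
    hence "v - \<sigma> = - of_nat n" by (simp add: algebra_simps)
    thus False using assms(1)[OF that] by simp
  qed
  ultimately show ?thesis unfolding tt_def cc_def by (auto intro!: holomorphic_intros)
qed

lemma Gs_holo_sigma:
  assumes "Re v < 2"
  shows "(\<lambda>\<sigma>. Gs v \<sigma>) holomorphic_on {\<sigma>. \<sigma> \<notin> \<int>\<^sub>\<le>\<^sub>0 \<and> v - \<sigma> \<notin> \<int>\<^sub>\<le>\<^sub>0}" (is "_ holomorphic_on ?S")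
proof -
  have opS: "open ?S"
  proof -
    have "?S = - \<int>\<^sub>\<le>\<^sub>0 \<inter> - {\<sigma>. v - \<sigma> \<in> \<int>\<^sub>\<le>\<^sub>0}" by auto
    moreover have "open (- (\<int>\<^sub>\<le>\<^sub>0 :: complex set) \<inter> - {\<sigma>. v - \<sigma> \<in> \<int>\<^sub>\<le>\<^sub>0})"
      by (intro open_Int open_Compl closed_nonpos_Ints closed_shift_npi)
    ultimately show ?thesis by simp
  qed
  show ?thesis unfolding Gs_def
  proof (rule holomorphic_uniform_sequence[OF opS, where f = "\<lambda>N \<sigma>. \<Sum>n<N. tt v \<sigma> n"])
    fix N show "(\<lambda>\<sigma>. \<Sum>n<N. tt v \<sigma> n) holomorphic_on ?S"
      by (intro holomorphic_on_sum tt_holo) auto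
  next
    fix \<sigma>1 assume s1: "\<sigma>1 \<in> ?S"
    obtain d where d: "d > 0" "cball \<sigma>1 d \<subseteq> ?S" using open_contains_cball[of ?S] opS s1 by blast
    have "uniform_limit (cball \<sigma>1 d) (\<lambda>N x. \<Sum>n<N. tt ((\<lambda>_. v) x) (id x) n) (\<lambda>x. \<Sum>n. tt ((\<lambda>_. v) x) (id x) n) sequentially"
    proof (rule tt_uniform(1)[of "norm v + norm \<sigma>1 + d" "Re v"])
      fix x assume "x \<in> cball \<sigma>1 d"
      hence "norm (x - \<sigma>1) \<le> d" by (simp add: dist_norm norm_minus_commute)
      hence nx: "norm x \<le> norm \<sigma>1 + d" using norm_triangle_ineq2[of x \<sigma>1] by linarith
      show "norm (id x) \<le> norm v + norm \<sigma>1 + d" unfolding id_def using nx norm_ge_zero[of v] by linarith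
    qed (use assms d in auto)
    thus "\<exists>d>0. cball \<sigma>1 d \<subseteq> ?S \<and> uniform_limit (cball \<sigma>1 d) (\<lambda>N \<sigma>. \<Sum>n<N. tt v \<sigma> n) (\<lambda>\<sigma>. \<Sum>n. tt v \<sigma> n) sequentially"
      using d by auto
  qed
qed

lemma Gs_holo_v:
  assumes "\<sigma> \<notin> \<int>\<^sub>\<le>\<^sub>0"
  shows "(\<lambda>v. Gs v \<sigma>) holomorphic_on {v. Re v < 2 \<and> v - \<sigma> \<notin> \<int>\<^sub>\<le>\<^sub>0}" (is "_ holomorphic_on ?D")
proof -
  have opD: "open ?D"
  proof -
    have "?D = {v. Re v < 2} \<inter> - {v. v - \<sigma> \<in> \<int>\<^sub>\<le>\<^sub>0}" by auto
    moreover have "closed {v. v - \<sigma> \<in> \<int>\<^sub>\<le>\<^sub>0}"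
    proof -
      have "{v. v - \<sigma> \<in> \<int>\<^sub>\<le>\<^sub>0} = (\<lambda>v. v - \<sigma>) -` \<int>\<^sub>\<le>\<^sub>0" by auto
      also have "closed \<dots>" by (rule continuous_closed_vimage) (auto intro!: continuous_intros)
      finally show ?thesis .
    qed
    ultimately show ?thesis by (auto intro!: open_Int open_halfspace_Re_lt)
  qed
  show ?thesis unfolding Gs_def
  proof (rule holomorphic_uniform_sequence[OF opD, where f = "\<lambda>N v. \<Sum>n<N. tt v \<sigma> n"])
    fix N show "(\<lambda>v. \<Sum>n<N. tt v \<sigma> n) holomorphic_on ?D"
      by (intro holomorphic_on_sum tt_holo_v) (use assms in auto)
  next
    fix v1 assume v1: "v1 \<in> ?D"
    obtain d0 where d0: "d0 > 0" "cball v1 d0 \<subseteq> ?D" using open_contains_cball[of ?D] opD v1 by blast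
    define d where "d = min d0 ((2 - Re v1) / 2)"
    have "min d0 ((2 - Re v1) / 2) \<le> (2 - Re v1) / 2" by (rule min.cobounded2)
    hence d: "d > 0" "cball v1 d \<subseteq> ?D" "Re v1 + d < 2" using d0 v1 unfolding d_def by auto
    have "uniform_limit (cball v1 d) (\<lambda>N x. \<Sum>n<N. tt (id x) ((\<lambda>_. \<sigma>) x) n) (\<lambda>x. \<Sum>n. tt (id x) ((\<lambda>_. \<sigma>) x) n) sequentially"
    proof (rule tt_uniform(1)[of "norm v1 + norm \<sigma> + d" "Re v1 + d"])
      fix x assume "x \<in> cball v1 d"
      hence xd: "norm (x - v1) \<le> d" by (simp add: dist_norm norm_minus_commute)
      hence nx: "norm x \<le> norm v1 + d" using norm_triangle_ineq2[of x v1] by linarith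
      show "norm (id x) \<le> norm v1 + norm \<sigma> + d" unfolding id_def using nx norm_ge_zero[of \<sigma>] by linarith
      have "Re (x - v1) \<le> d" using xd complex_Re_le_cmod[of "x - v1"] by linarith
      thus "Re (id x) \<le> Re v1 + d" by simp
    qed (use d in auto)
    thus "\<exists>d>0. cball v1 d \<subseteq> ?D \<and> uniform_limit (cball v1 d) (\<lambda>N v. \<Sum>n<N. tt v \<sigma> n) (\<lambda>v. \<Sum>n. tt v \<sigma> n) sequentially"
      using d by auto
  qed
qed


lemma open_S: "open {\<sigma>::complex. \<sigma> \<notin> \<int>\<^sub>\<le>\<^sub>0 \<and> v - \<sigma> \<notin> \<int>\<^sub>\<le>\<^sub>0}"
proof -
  have "{\<sigma>::complex. \<sigma> \<notin> \<int>\<^sub>\<le>\<^sub>0 \<and> v - \<sigma> \<notin> \<int>\<^sub>\<le>\<^sub>0} = - \<int>\<^sub>\<le>\<^sub>0 \<inter> - {\<sigma>. v - \<sigma> \<in> \<int>\<^sub>\<le>\<^sub>0}" by auto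
  moreover have "open (- (\<int>\<^sub>\<le>\<^sub>0 :: complex set) \<inter> - {\<sigma>. v - \<sigma> \<in> \<int>\<^sub>\<le>\<^sub>0})"
    by (intro open_Int open_Compl closed_nonpos_Ints closed_shift_npi)
  ultimately show ?thesis by simp
qed

lemma connected_S: "connected {\<sigma>::complex. \<sigma> \<notin> \<int>\<^sub>\<le>\<^sub>0 \<and> v - \<sigma> \<notin> \<int>\<^sub>\<le>\<^sub>0}"
proof -
  have "{\<sigma>::complex. \<sigma> \<notin> \<int>\<^sub>\<le>\<^sub>0 \<and> v - \<sigma> \<notin> \<int>\<^sub>\<le>\<^sub>0} = UNIV - (\<int>\<^sub>\<le>\<^sub>0 \<union> {\<sigma>. v - \<sigma> \<in> \<int>\<^sub>\<le>\<^sub>0})" by auto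
  moreover have "connected (UNIV - (\<int>\<^sub>\<le>\<^sub>0 \<union> {\<sigma>::complex. v - \<sigma> \<in> \<int>\<^sub>\<le>\<^sub>0}))"
    by (rule connected_open_diff_countable) (auto simp: countable_npi countable_shift_npi)
  ultimately show ?thesis by simp
qed

lemma open_D: "open {v::complex. Re v < 2 \<and> v - \<sigma> \<notin> \<int>\<^sub>\<le>\<^sub>0}"
proof -
  have c: "closed {v::complex. v - \<sigma> \<in> \<int>\<^sub>\<le>\<^sub>0}"
  proof -
    have "{v::complex. v - \<sigma> \<in> \<int>\<^sub>\<le>\<^sub>0} = (\<lambda>v. v - \<sigma>) -` \<int>\<^sub>\<le>\<^sub>0" by auto
    also have "closed \<dots>" by (rule continuous_closed_vimage) (auto intro!: continuous_intros)
    finally show ?thesis .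
  qed
  have "{v::complex. Re v < 2 \<and> v - \<sigma> \<notin> \<int>\<^sub>\<le>\<^sub>0} = {v. Re v < 2} \<inter> - {v. v - \<sigma> \<in> \<int>\<^sub>\<le>\<^sub>0}" by auto
  moreover have "open ({v::complex. Re v < 2} \<inter> - {v. v - \<sigma> \<in> \<int>\<^sub>\<le>\<^sub>0})"
    by (intro open_Int open_Compl c open_halfspace_Re_lt)
  ultimately show ?thesis by simp
qed

lemma connected_D: "connected {v::complex. Re v < 2 \<and> v - \<sigma> \<notin> \<int>\<^sub>\<le>\<^sub>0}"
proof -
  have cnt: "countable {v::complex. v - \<sigma> \<in> \<int>\<^sub>\<le>\<^sub>0}"
  proof -
    have "{v::complex. v - \<sigma> \<in> \<int>\<^sub>\<le>\<^sub>0} \<subseteq> (\<lambda>z. z + \<sigma>) ` \<int>\<^sub>\<le>\<^sub>0" by (auto intro: image_eqI[of _ _ "_ - \<sigma>"])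
    thus ?thesis by (rule countable_subset) (simp add: countable_npi)
  qed
  have "{v::complex. Re v < 2 \<and> v - \<sigma> \<notin> \<int>\<^sub>\<le>\<^sub>0} = {v. Re v < 2} - {v. v - \<sigma> \<in> \<int>\<^sub>\<le>\<^sub>0}" by auto
  moreover have "connected ({v::complex. Re v < 2} - {v. v - \<sigma> \<in> \<int>\<^sub>\<le>\<^sub>0})"
    by (rule connected_open_diff_countable) (auto simp: cnt intro: open_halfspace_Re_lt)
  ultimately show ?thesis by simp
qed

lemma real_not_npi: "(t::real) > 0 \<Longrightarrow> complex_of_real t \<notin> \<int>\<^sub>\<le>\<^sub>0"
  by (auto elim!: nonpos_Ints_cases simp: complex_eq_iff)

lemma islimpt_real_interval:
  assumes "a < c" "c < b"
  shows "complex_of_real c islimpt complex_of_real ` {a<..<b}"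
  unfolding islimpt_approachable
proof (intro allI impI)
  fix e :: real assume e: "e > 0"
  define m where "m = min (e/2) ((b - c)/2)"
  have m1: "m > 0" using e assms unfolding m_def by simp
  have m2: "m \<le> (b - c)/2" unfolding m_def by (rule min.cobounded2)
  have m3: "m \<le> e/2" unfolding m_def by (rule min.cobounded1)
  note m = m1 m2 m3
  define c' where "c' = c + m"
  have c': "a < c'" "c' < b" "c' \<noteq> c" "dist c' c < e"
    using assms e m unfolding c'_def dist_real_def by auto
  show "\<exists>x'\<in>complex_of_real ` {a<..<b}. x' \<noteq> complex_of_real c \<and> dist x' (complex_of_real c) < e"
    using c' by (intro bexI[of _ "complex_of_real c'"]) (auto simp: dist_of_real)
qed

lemma tt_real:
  "tt (complex_of_real v0) (complex_of_real t) n =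
     complex_of_real (((-(t + (v0 - t))) gchoose n) * (1 / (real n + t) + 1 / (real n + (v0 - t))))"
  by (simp add: tt_def cc_def gbinomial_pochhammer pochhammer_of_real)

lemma stage1:
  fixes v0 :: real assumes v0: "0 < v0" "v0 < 1"
    and \<sigma>: "\<sigma> \<notin> \<int>\<^sub>\<le>\<^sub>0" "complex_of_real v0 - \<sigma> \<notin> \<int>\<^sub>\<le>\<^sub>0"
  shows "Gs (complex_of_real v0) \<sigma> = Bc (complex_of_real v0) \<sigma>"
proof -
  let ?v = "complex_of_real v0"
  let ?S = "{\<sigma>. \<sigma> \<notin> \<int>\<^sub>\<le>\<^sub>0 \<and> ?v - \<sigma> \<notin> \<int>\<^sub>\<le>\<^sub>0}"
  have "(\<lambda>\<sigma>. Gs ?v \<sigma> - Bc ?v \<sigma>) \<sigma> = 0"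
  proof (rule analytic_continuation[of "\<lambda>\<sigma>. Gs ?v \<sigma> - Bc ?v \<sigma>" ?S "complex_of_real ` {0<..<v0}" "complex_of_real (v0/2)" \<sigma>])
    show "(\<lambda>\<sigma>. Gs ?v \<sigma> - Bc ?v \<sigma>) holomorphic_on ?S"
      unfolding Bc_def using v0 by (intro holomorphic_intros Gs_holo_sigma) auto
    show "open ?S" by (rule open_S)
    show "connected ?S" by (rule connected_S)
    have sub: "complex_of_real t \<in> ?S" if "0 < t" "t < v0" for t
      using that real_not_npi[of t] real_not_npi[of "v0 - t"] by simp
    show "complex_of_real ` {0<..<v0} \<subseteq> ?S" using sub by auto
    show "complex_of_real (v0/2) \<in> ?S" using sub[of "v0/2"] v0 by simp
    show "complex_of_real (v0/2) islimpt complex_of_real ` {0<..<v0}"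
      by (rule islimpt_real_interval) (use v0 in auto)
    show "\<sigma> \<in> ?S" using \<sigma> by simp
    fix z assume "z \<in> complex_of_real ` {0<..<v0}"
    then obtain t where t: "0 < t" "t < v0" "z = complex_of_real t" by auto
    have rb: "(\<lambda>n. ((-(t + (v0 - t))) gchoose n) * (1 / (real n + t) + 1 / (real n + (v0 - t)))) sums Beta t (v0 - t)"
      by (rule real_base) (use t v0 in auto)
    have "tt ?v z sums complex_of_real (Beta t (v0 - t))"
      unfolding t(3) tt_real using rb by (simp only: sums_of_real_iff)
    hence "Gs ?v z = complex_of_real (Beta t (v0 - t))" unfolding Gs_def by (rule sums_unique[symmetric])
    also have "\<dots> = Beta (complex_of_real t) (complex_of_real (v0 - t))" by (simp only: Beta_complex_of_real)
    also have "\<dots> = Bc ?v z" unfolding Bc_def Beta_altdef t(3) by simp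
    finally show "Gs ?v z - Bc ?v z = 0" by simp
  qed
  thus ?thesis by simp
qed


lemma good_interval:
  fixes \<sigma> :: complex
  shows "\<exists>a b. 0 < a \<and> a < b \<and> b < 1 \<and> (\<forall>t. a < t \<and> t < b \<longrightarrow> complex_of_real t - \<sigma> \<notin> \<int>\<^sub>\<le>\<^sub>0)"
proof (cases "\<forall>t. 1/8 < t \<and> t < 3/8 \<longrightarrow> complex_of_real t - \<sigma> \<notin> \<int>\<^sub>\<le>\<^sub>0")
  case True
  thus ?thesis by (intro exI[of _ "1/8"] exI[of _ "3/8"]) auto
next
  case False
  then obtain t1 where t1: "1/8 < t1" "t1 < 3/8" "complex_of_real t1 - \<sigma> \<in> \<int>\<^sub>\<le>\<^sub>0" by auto
  have "\<forall>t. 5/8 < t \<and> t < 7/8 \<longrightarrow> complex_of_real t - \<sigma> \<notin> \<int>\<^sub>\<le>\<^sub>0"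
  proof (intro allI impI notI)
    fix t assume t: "5/8 < t \<and> t < 7/8" and bad: "complex_of_real t - \<sigma> \<in> \<int>\<^sub>\<le>\<^sub>0"
    have "(complex_of_real t - \<sigma>) - (complex_of_real t1 - \<sigma>) \<in> \<int>"
      by (rule Ints_diff) (use bad t1(3) nonpos_Ints_subset_Ints in blast)+
    hence "complex_of_real (t - t1) \<in> \<int>" by simp
    hence "t - t1 \<in> \<int>" by (simp only: of_real_in_Ints_iff)
    then obtain k where k: "t - t1 = of_int k" by (auto elim: Ints_cases)
    have "1/4 < t - t1" "t - t1 < 3/4" using t t1 by auto
    hence "0 < k" "k < 1" unfolding k by linarith+
    thus False by simp
  qed
  thus ?thesis by (intro exI[of _ "5/8"] exI[of _ "7/8"]) auto
qed

lemma main_sum: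
  fixes v \<sigma> :: complex
  assumes v: "Re v < 2" and \<sigma>: "\<sigma> \<notin> \<int>\<^sub>\<le>\<^sub>0" and v\<sigma>: "v - \<sigma> \<notin> \<int>\<^sub>\<le>\<^sub>0"
  shows "tt v \<sigma> sums Bc v \<sigma>"
proof -
  have s: "tt v \<sigma> sums Gs v \<sigma>"
    using tt_uniform(2)[of "norm v + norm \<sigma>" "Re v" "{()}" "\<lambda>_. v" "\<lambda>_. \<sigma>" "()"] v
    unfolding Gs_def by auto
  let ?D = "{v. Re v < 2 \<and> v - \<sigma> \<notin> \<int>\<^sub>\<le>\<^sub>0}"
  obtain a b where ab: "0 < a" "a < b" "b < 1" "\<And>t. a < t \<Longrightarrow> t < b \<Longrightarrow> complex_of_real t - \<sigma> \<notin> \<int>\<^sub>\<le>\<^sub>0"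
    using good_interval[of \<sigma>] by blast
  have "(\<lambda>v. Gs v \<sigma> - Bc v \<sigma>) v = 0"
  proof (rule analytic_continuation[of "\<lambda>v. Gs v \<sigma> - Bc v \<sigma>" ?D "complex_of_real ` {a<..<b}" "complex_of_real ((a+b)/2)" v])
    show "(\<lambda>v. Gs v \<sigma> - Bc v \<sigma>) holomorphic_on ?D"
      unfolding Bc_def by (intro holomorphic_intros Gs_holo_v \<sigma>) auto
    show "open ?D" by (rule open_D)
    show "connected ?D" by (rule connected_D)
    have sub: "complex_of_real t \<in> ?D" if "a < t" "t < b" for t
      using that ab by auto
    show "complex_of_real ` {a<..<b} \<subseteq> ?D" using sub by auto
    show "complex_of_real ((a+b)/2) \<in> ?D" using sub[of "(a+b)/2"] ab by simp
    show "complex_of_real ((a+b)/2) islimpt complex_of_real ` {a<..<b}"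
      by (rule islimpt_real_interval) (use ab in auto)
    show "v \<in> ?D" using v v\<sigma> by simp
    fix z assume "z \<in> complex_of_real ` {a<..<b}"
    then obtain t where t: "a < t" "t < b" "z = complex_of_real t" by auto
    have "Gs (complex_of_real t) \<sigma> = Bc (complex_of_real t) \<sigma>"
      by (rule stage1) (use t ab \<sigma> in auto)
    thus "Gs z \<sigma> - Bc z \<sigma> = 0" using t by simp
  qed
  thus ?thesis using s by simp
qed


lemma poch_nz: "(w::complex) \<notin> \<int>\<^sub>\<le>\<^sub>0 \<Longrightarrow> pochhammer w n \<noteq> 0"
  by (auto simp: pochhammer_eq_0_iff)

lemma npi_plus_nat: "(w::complex) \<notin> \<int>\<^sub>\<le>\<^sub>0 \<Longrightarrow> w + of_nat n \<noteq> 0"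
proof
  assume "w \<notin> \<int>\<^sub>\<le>\<^sub>0" "w + of_nat n = 0"
  hence "w = - of_nat n" "w \<notin> \<int>\<^sub>\<le>\<^sub>0" by (simp_all add: add_eq_0_iff2)
  thus False by simp
qed

lemma npi_from_succ: "1 + (z::complex) \<notin> \<int>\<^sub>\<le>\<^sub>0 \<Longrightarrow> z \<noteq> 0 \<Longrightarrow> z \<notin> \<int>\<^sub>\<le>\<^sub>0"
proof
  assume a: "1 + z \<notin> \<int>\<^sub>\<le>\<^sub>0" "z \<noteq> 0" "z \<in> \<int>\<^sub>\<le>\<^sub>0"
  then obtain k where k: "z = of_int k" "k \<le> 0" by (auto elim!: nonpos_Ints_cases)
  with a(2) have "k \<le> -1" by auto
  hence "1 + z = of_int (1 + k)" "1 + k \<le> 0" using k by simp_all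
  thus False using a(1) by (metis nonpos_Ints_of_int)
qed

lemma poch_shift1: "pochhammer (1 + w) n = pochhammer (w::complex) n * (w + of_nat n) / w" if "w \<noteq> 0"
proof -
  have "w * pochhammer (w + 1) n = pochhammer w n * (w + of_nat n)"
    using pochhammer_rec[of w n] pochhammer_Suc[of w n] by simp
  thus ?thesis using that by (simp add: field_simps add.commute)
qed

lemma poch_shift2: "pochhammer w n = w * pochhammer (1 + w) n / (w + of_nat n)" if "w + of_nat n \<noteq> (0::complex)"
proof -
  have "w * pochhammer (w + 1) n = pochhammer w n * (w + of_nat n)"
    using pochhammer_rec[of w n] pochhammer_Suc[of w n] by simp
  thus ?thesis using that by (simp add: field_simps add.commute)
qed

lemma rat_core:
  fixes X A B :: complex
  assumes nz: "X - A \<noteq> 0" "X + A \<noteq> 0" "X - B \<noteq> 0" "X + B \<noteq> 0"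
  shows "X * (2 * X^2 - A^2 - B^2) / ((X - A) * (X + A) * (X - B) * (X + B))
       = (1 / (X - A) + 1 / (X + A) + 1 / (X - B) + 1 / (X + B)) / 2"
proof -
  define D where "D = (X - A) * (X + A) * (X - B) * (X + B)"
  have D: "D \<noteq> 0" using nz by (simp add: D_def)
  have e1: "1 / (X - A) = ((X + A) * (X - B) * (X + B)) / D" using nz D by (simp add: D_def field_simps)
  have e2: "1 / (X + A) = ((X - A) * (X - B) * (X + B)) / D" using nz D by (simp add: D_def field_simps)
  have e3: "1 / (X - B) = ((X - A) * (X + A) * (X + B)) / D" using nz D by (simp add: D_def field_simps)
  have e4: "1 / (X + B) = ((X - A) * (X + A) * (X - B)) / D" using nz D by (simp add: D_def field_simps)
  have num: "(X + A) * (X - B) * (X + B) + (X - A) * (X - B) * (X + B) + (X - A) * (X + A) * (X + B) + (X - A) * (X + A) * (X - B)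
      = 2 * (X * (2 * X^2 - A^2 - B^2))"
    by (simp add: algebra_simps power2_eq_square)
  have "(1 / (X - A) + 1 / (X + A) + 1 / (X - B) + 1 / (X + B)) / 2
      = (((X + A) * (X - B) * (X + B) + (X - A) * (X - B) * (X + B) + (X - A) * (X + A) * (X + B) + (X - A) * (X + A) * (X - B)) / D) / 2"
    unfolding e1 e2 e3 e4 by (simp add: add_divide_distrib)
  also have "\<dots> = X * (2 * X^2 - A^2 - B^2) / D" unfolding num by simp
  finally show ?thesis unfolding D_def by simp
qed



lemma gen_rearr:
  fixes X v N L S Dp :: complex
  assumes "v \<noteq> 0" "L \<noteq> 0" "Dp \<noteq> 0"
  shows "(X / (v/2)) * ((N/2) / L) * S / Dp = S / (v * L) * (X * N / Dp)"
  using assms by (simp add: field_simps)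

lemma term_identity:
  fixes v a b c s :: complex and n :: nat
  assumes c0: "c \<noteq> 0" and v0: "v \<noteq> 0" and ss: "s^2 = a^2 + b^2"
    and l1def: "l1 = v/2 - s/(2*c)" and l2def: "l2 = v/2 + s/(2*c)"
    and s3def: "s3 = v/2 - a/(2*c) - b/(2*c)" and s4def: "s4 = v/2 - a/(2*c) + b/(2*c)"
    and s5def: "s5 = v/2 + a/(2*c) + b/(2*c)" and s6def: "s6 = v/2 + a/(2*c) - b/(2*c)"
    and Pdef: "P = (v * c - a - b) * (v * c + a + b) * (v * c - a + b) * (v * c + a - b)"
    and l1n: "l1 \<noteq> 0" and l2n: "l2 \<noteq> 0"
    and n3: "of_nat n + s3 \<noteq> 0" and n4: "of_nat n + s4 \<noteq> 0"
    and n5: "of_nat n + s5 \<noteq> 0" and n6: "of_nat n + s6 \<noteq> 0"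
  shows "((of_nat n + v/2) / (v/2)) * ((l1 + of_nat n) / l1) * ((l2 + of_nat n) / l2)
          * (s3 / (s3 + of_nat n)) * (s4 / (s4 + of_nat n)) * (s5 / (s5 + of_nat n)) * (s6 / (s6 + of_nat n))
       = P / (8 * (v^3 * c^4 - a^2 * v * c^2 - b^2 * v * c^2))
          * (1 / (of_nat n + s3) + 1 / (of_nat n + s5) + 1 / (of_nat n + s4) + 1 / (of_nat n + s6))"
proof -
  define X where "X = of_nat n + v/2"
  define A where "A = (a + b) / (2*c)"
  define B where "B = (a - b) / (2*c)"
  have x3: "of_nat n + s3 = X - A" unfolding X_def A_def s3def by (simp add: add_divide_distrib algebra_simps)
  have x5: "of_nat n + s5 = X + A" unfolding X_def A_def s5def by (simp add: add_divide_distrib algebra_simps)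
  have x4: "of_nat n + s4 = X - B" unfolding X_def B_def s4def by (simp add: diff_divide_distrib algebra_simps)
  have x6: "of_nat n + s6 = X + B" unfolding X_def B_def s6def by (simp add: diff_divide_distrib algebra_simps)
  have hA: "A^2 + B^2 = s^2 / (2 * c^2)" unfolding A_def B_def ss using c0
    by (simp add: field_simps power2_eq_square)
  have ll0: "(l1 + of_nat n) * (l2 + of_nat n) = (2 * X^2 - (A^2 + B^2)) / 2"
    unfolding hA l1def l2def X_def using c0 by (simp add: field_simps power2_eq_square)
  have ll: "(l1 + of_nat n) * (l2 + of_nat n) = (2 * X^2 - A^2 - B^2) / 2"
    using ll0 by (simp only: diff_diff_eq)
  have l12: "4 * v * c^4 * (l1 * l2) = v^3 * c^4 - a^2 * v * c^2 - b^2 * v * c^2"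
  proof -
    have e: "l1 * l2 = (v^2 * c^2 - s^2) / (4 * c^2)" unfolding l1def l2def using c0
      by (simp add: field_simps power2_eq_square)
    have "4 * v * c^4 * (l1 * l2) = v * c^2 * (v^2 * c^2 - s^2)" unfolding e using c0
      by (simp add: field_simps power2_eq_square eval_nat_numeral)
    also have "\<dots> = v^3 * c^4 - a^2 * v * c^2 - b^2 * v * c^2" unfolding ss
      by (simp add: algebra_simps eval_nat_numeral)
    finally show ?thesis .
  qed
  have Pe: "P = 16 * c^4 * (s3 * s4 * s5 * s6)"
    unfolding Pdef s3def s4def s5def s6def using c0 by (simp add: field_simps) (simp add: algebra_simps eval_nat_numeral)
  have Q: "P / (8 * (v^3 * c^4 - a^2 * v * c^2 - b^2 * v * c^2)) = (s3 * s4 * s5 * s6) / (2 * v * (l1 * l2))"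
    unfolding l12[symmetric] Pe using c0 v0 l1n l2n by (simp add: field_simps)
  have D: "X - A \<noteq> 0" "X + A \<noteq> 0" "X - B \<noteq> 0" "X + B \<noteq> 0" using n3 n4 n5 n6 x3 x4 x5 x6 by auto
  have "((of_nat n + v/2) / (v/2)) * ((l1 + of_nat n) / l1) * ((l2 + of_nat n) / l2)
          * (s3 / (s3 + of_nat n)) * (s4 / (s4 + of_nat n)) * (s5 / (s5 + of_nat n)) * (s6 / (s6 + of_nat n))
      = (X / (v/2)) * (((l1 + of_nat n) * (l2 + of_nat n)) / (l1 * l2)) * (s3 * s4 * s5 * s6) / ((X - A) * (X + A) * (X - B) * (X + B))"
  proof -
    have y: "s3 + of_nat n = X - A" "s4 + of_nat n = X - B" "s5 + of_nat n = X + A" "s6 + of_nat n = X + B"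
      using x3 x4 x5 x6 by (simp_all add: add.commute)
    show ?thesis unfolding y X_def[symmetric] using D v0 l1n l2n by (simp add: field_simps)
  qed
  also have "\<dots> = (s3 * s4 * s5 * s6) / (v * (l1 * l2)) * (X * (2 * X^2 - A^2 - B^2) / ((X - A) * (X + A) * (X - B) * (X + B)))"
    unfolding ll by (rule gen_rearr) (use v0 l1n l2n D in auto)
  also have "\<dots> = (s3 * s4 * s5 * s6) / (v * (l1 * l2)) * ((1 / (X - A) + 1 / (X + A) + 1 / (X - B) + 1 / (X + B)) / 2)"
    by (simp only: rat_core[OF D])
  also have "\<dots> = P / (8 * (v^3 * c^4 - a^2 * v * c^2 - b^2 * v * c^2))
          * (1 / (of_nat n + s3) + 1 / (of_nat n + s5) + 1 / (of_nat n + s4) + 1 / (of_nat n + s6))"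
    unfolding Q x3 x4 x5 x6 by simp
  finally show ?thesis .
qed


lemma h_gen:
  fixes pv P1 P2 P3 Q3 Q4 Q5 Q6 w l1 l2 s3 s4 s5 s6 W L1 L2 T3 T4 T5 T6 x f :: complex
  assumes "P1 \<noteq> 0" "P2 \<noteq> 0" "P3 \<noteq> 0" "Q3 \<noteq> 0" "Q4 \<noteq> 0" "Q5 \<noteq> 0" "Q6 \<noteq> 0"
    "w \<noteq> 0" "l1 \<noteq> 0" "l2 \<noteq> 0" "T3 \<noteq> 0" "T4 \<noteq> 0" "T5 \<noteq> 0" "T6 \<noteq> 0" "f \<noteq> 0"
  shows "(pv * ((P1 * W / w) * ((P2 * L1 / l1) * ((P3 * L2 / l2) * ((s3 * Q3 / T3) * ((s4 * Q4 / T4) * ((s5 * Q5 / T5) * (s6 * Q6 / T6))))))))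
        / (P1 * (P2 * (P3 * (Q3 * (Q4 * (Q5 * Q6)))))) * x / f
      = x * pv / f * ((W / w) * (L1 / l1) * (L2 / l2) * (s3 / T3) * (s4 / T4) * (s5 / T5) * (s6 / T6))"
  using assms by (simp add: field_simps)

lemma Gamma_div_aux: "x / (y * Gamma (v::complex)) = x / y * rGamma v"
  by (simp add: Gamma_def divide_inverse mult_ac)

theorem mainTheorem7:
  fixes v a b c s :: complex
  assumes "Re v < 2" and "Re c > 0"
    and "Re (v * c + a + b) > 0" and "Re (v * c + a - b) > 0"
    and "Re (v * c - a + b) > 0" and "Re (v * c - a - b) > 0"
    and "s ^ 2 = a ^ 2 + b ^ 2"
    and "v / 2 \<notin> \<int>\<^sub>\<le>\<^sub>0"
    and "v / 2 - s / (2*c) \<notin> \<int>\<^sub>\<le>\<^sub>0"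
    and "v / 2 + s / (2*c) \<notin> \<int>\<^sub>\<le>\<^sub>0"
    and "1 + (v/2 - a/(2*c) - b/(2*c)) \<notin> \<int>\<^sub>\<le>\<^sub>0"
    and "1 + (v/2 - a/(2*c) + b/(2*c)) \<notin> \<int>\<^sub>\<le>\<^sub>0"
    and "1 + (v/2 + a/(2*c) + b/(2*c)) \<notin> \<int>\<^sub>\<le>\<^sub>0"
    and "1 + (v/2 + a/(2*c) - b/(2*c)) \<notin> \<int>\<^sub>\<le>\<^sub>0"
  shows
    "let l1 = v/2 - s/(2*c); l2 = v/2 + s/(2*c);
         s3 = v/2 - a/(2*c) - b/(2*c); s4 = v/2 - a/(2*c) + b/(2*c);
         s5 = v/2 + a/(2*c) + b/(2*c); s6 = v/2 + a/(2*c) - b/(2*c);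
         P = (v * c - a - b) * (v * c + a + b) * (v * c - a + b) * (v * c + a - b)
     in hypergeometric [v, 1 + v/2, 1 + l1, 1 + l2, s3, s4, s5, s6]
                       [v/2, l1, l2, 1 + s3, 1 + s4, 1 + s5, 1 + s6] (-1)
        = P / (8 * (v^3 * c^4 - a^2 * v * c^2 - b^2 * v * c^2) * Gamma v)
            * (Gamma s5 * Gamma s3 + Gamma s6 * Gamma s4)"
proof -
  define l1 where "l1 = v/2 - s/(2*c)"
  define l2 where "l2 = v/2 + s/(2*c)"
  define s3 where "s3 = v/2 - a/(2*c) - b/(2*c)"
  define s4 where "s4 = v/2 - a/(2*c) + b/(2*c)"
  define s5 where "s5 = v/2 + a/(2*c) + b/(2*c)"
  define s6 where "s6 = v/2 + a/(2*c) - b/(2*c)"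
  define P where "P = (v * c - a - b) * (v * c + a + b) * (v * c - a + b) * (v * c + a - b)"
  define Q where "Q = P / (8 * (v^3 * c^4 - a^2 * v * c^2 - b^2 * v * c^2))"
  have c0: "c \<noteq> 0" using assms(2) by auto
  have v0: "v \<noteq> 0" using assms(8) by auto
  have v2: "v / 2 \<noteq> 0" using v0 by simp
  have l1n: "l1 \<noteq> 0" using assms(9) unfolding l1_def by auto
  have l2n: "l2 \<noteq> 0" using assms(10) unfolding l2_def by auto
  have l1p: "l1 \<notin> \<int>\<^sub>\<le>\<^sub>0" using assms(9) unfolding l1_def .
  have l2p: "l2 \<notin> \<int>\<^sub>\<le>\<^sub>0" using assms(10) unfolding l2_def .
  have p3: "1 + s3 \<notin> \<int>\<^sub>\<le>\<^sub>0" using assms(11) unfolding s3_def .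
  have p4: "1 + s4 \<notin> \<int>\<^sub>\<le>\<^sub>0" using assms(12) unfolding s4_def .
  have p5: "1 + s5 \<notin> \<int>\<^sub>\<le>\<^sub>0" using assms(13) unfolding s5_def .
  have p6: "1 + s6 \<notin> \<int>\<^sub>\<le>\<^sub>0" using assms(14) unfolding s6_def .
  have nzq: "z / (2 * c) \<noteq> 0" if "Re z > 0" for z using that c0 by auto
  have e3: "s3 = (v * c - a - b) / (2 * c)" unfolding s3_def using c0 by (simp add: field_simps)
  have e4: "s4 = (v * c - a + b) / (2 * c)" unfolding s4_def using c0 by (simp add: field_simps)
  have e5: "s5 = (v * c + a + b) / (2 * c)" unfolding s5_def using c0 by (simp add: field_simps)
  have e6: "s6 = (v * c + a - b) / (2 * c)" unfolding s6_def using c0 by (simp add: field_simps)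
  have z3: "s3 \<noteq> 0" unfolding e3 by (rule nzq) (use assms(6) in simp)
  have z4: "s4 \<noteq> 0" unfolding e4 by (rule nzq) (use assms(5) in simp)
  have z5: "s5 \<noteq> 0" unfolding e5 by (rule nzq) (use assms(3) in simp)
  have z6: "s6 \<noteq> 0" unfolding e6 by (rule nzq) (use assms(4) in simp)
  have n3: "s3 \<notin> \<int>\<^sub>\<le>\<^sub>0" by (rule npi_from_succ[OF p3 z3])
  have n4: "s4 \<notin> \<int>\<^sub>\<le>\<^sub>0" by (rule npi_from_succ[OF p4 z4])
  have n5: "s5 \<notin> \<int>\<^sub>\<le>\<^sub>0" by (rule npi_from_succ[OF p5 z5])
  have n6: "s6 \<notin> \<int>\<^sub>\<le>\<^sub>0" by (rule npi_from_succ[OF p6 z6])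
  have vs3: "v - s3 = s5" unfolding s3_def s5_def by (simp add: field_simps)
  have vs4: "v - s4 = s6" unfolding s4_def s6_def by (simp add: field_simps)
  have sum3: "tt v s3 sums Bc v s3" by (rule main_sum) (use assms(1) n3 n5 vs3 in auto)
  have sum4: "tt v s4 sums Bc v s4" by (rule main_sum) (use assms(1) n4 n6 vs4 in auto)
  have tmx: "hyper_term [v, 1 + v/2, 1 + l1, 1 + l2, s3, s4, s5, s6]
                       [v/2, l1, l2, 1 + s3, 1 + s4, 1 + s5, 1 + s6] (-1) n = Q * (tt v s3 n + tt v s4 n)" for n
  proof -
    have a3: "s3 + of_nat n \<noteq> 0" by (rule npi_plus_nat[OF n3])
    have a4: "s4 + of_nat n \<noteq> 0" by (rule npi_plus_nat[OF n4])
    have a5: "s5 + of_nat n \<noteq> 0" by (rule npi_plus_nat[OF n5])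
    have a6: "s6 + of_nat n \<noteq> 0" by (rule npi_plus_nat[OF n6])
    have b3: "of_nat n + s3 \<noteq> 0" "of_nat n + s4 \<noteq> 0" "of_nat n + s5 \<noteq> 0" "of_nat n + s6 \<noteq> 0"
      using a3 a4 a5 a6 by (simp_all add: add.commute)
    have q: "pochhammer (v/2) n \<noteq> 0" "pochhammer l1 n \<noteq> 0" "pochhammer l2 n \<noteq> 0"
      "pochhammer (1 + s3) n \<noteq> 0" "pochhammer (1 + s4) n \<noteq> 0" "pochhammer (1 + s5) n \<noteq> 0" "pochhammer (1 + s6) n \<noteq> 0"
      using poch_nz assms(8) l1p l2p p3 p4 p5 p6 by blast+
    define R where "R = ((of_nat n + v/2) / (v/2)) * ((l1 + of_nat n) / l1) * ((l2 + of_nat n) / l2)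
          * (s3 / (s3 + of_nat n)) * (s4 / (s4 + of_nat n)) * (s5 / (s5 + of_nat n)) * (s6 / (s6 + of_nat n))"
    have hp: "hyper_term [v, 1 + v/2, 1 + l1, 1 + l2, s3, s4, s5, s6]
                       [v/2, l1, l2, 1 + s3, 1 + s4, 1 + s5, 1 + s6] (-1) n =
       (pochhammer v n * (pochhammer (1 + v/2) n * (pochhammer (1 + l1) n * (pochhammer (1 + l2) n *
         (pochhammer s3 n * (pochhammer s4 n * (pochhammer s5 n * pochhammer s6 n)))))))
       / (pochhammer (v/2) n * (pochhammer l1 n * (pochhammer l2 n * (pochhammer (1 + s3) n *
         (pochhammer (1 + s4) n * (pochhammer (1 + s5) n * pochhammer (1 + s6) n)))))) * (-1)^n / fact n"
      unfolding hyper_term_def by simp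
    have h: "hyper_term [v, 1 + v/2, 1 + l1, 1 + l2, s3, s4, s5, s6]
                       [v/2, l1, l2, 1 + s3, 1 + s4, 1 + s5, 1 + s6] (-1) n = cc v n * R"
      unfolding hp cc_def R_def
      unfolding poch_shift1[OF v2] poch_shift1[OF l1n] poch_shift1[OF l2n]
        poch_shift2[OF a3] poch_shift2[OF a4] poch_shift2[OF a5] poch_shift2[OF a6]
      by (subst h_gen) (use q v2 l1n l2n a3 a4 a5 a6 in \<open>simp_all add: add.commute\<close>)
    have r: "R = Q * (1 / (of_nat n + s3) + 1 / (of_nat n + s5) + 1 / (of_nat n + s4) + 1 / (of_nat n + s6))"
      unfolding R_def Q_def
      by (rule term_identity[OF c0 v0 assms(7) l1_def l2_def s3_def s4_def s5_def s6_def P_def l1n l2n b3])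
    have t: "tt v s3 n + tt v s4 n = cc v n * (1 / (of_nat n + s3) + 1 / (of_nat n + s5) + 1 / (of_nat n + s4) + 1 / (of_nat n + s6))"
    proof -
      have "of_nat n + v - s3 = of_nat n + s5" "of_nat n + v - s4 = of_nat n + s6"
        using vs3 vs4 by (simp_all add: algebra_simps)
      thus ?thesis unfolding tt_def by (simp add: algebra_simps)
    qed
    show ?thesis unfolding h r t by (simp add: mult_ac)
  qed
  have "(\<lambda>n. Q * (tt v s3 n + tt v s4 n)) sums (Q * (Bc v s3 + Bc v s4))"
    by (intro sums_mult sums_add sum3 sum4)
  hence "(\<lambda>n. hyper_term [v, 1 + v/2, 1 + l1, 1 + l2, s3, s4, s5, s6]
                       [v/2, l1, l2, 1 + s3, 1 + s4, 1 + s5, 1 + s6] (-1) n) sums (Q * (Bc v s3 + Bc v s4))"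
    by (simp only: tmx)
  hence hy: "hypergeometric [v, 1 + v/2, 1 + l1, 1 + l2, s3, s4, s5, s6]
                       [v/2, l1, l2, 1 + s3, 1 + s4, 1 + s5, 1 + s6] (-1) = Q * (Bc v s3 + Bc v s4)"
    unfolding hypergeometric_def by (rule sums_unique[symmetric])
  have fin: "hypergeometric [v, 1 + v/2, 1 + l1, 1 + l2, s3, s4, s5, s6]
                       [v/2, l1, l2, 1 + s3, 1 + s4, 1 + s5, 1 + s6] (-1)
        = P / (8 * (v^3 * c^4 - a^2 * v * c^2 - b^2 * v * c^2) * Gamma v)
            * (Gamma s5 * Gamma s3 + Gamma s6 * Gamma s4)"
    unfolding hy Gamma_div_aux Q_def Bc_def vs3 vs4 by (simp add: algebra_simps)
  show ?thesis using fin unfolding Let_def l1_def l2_def s3_def s4_def s5_def s6_def P_def .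
qed


end
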